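(* Let $k\in\mathbb{N}_0\cup\{\infty\}$, let $E,F$ be locally convex super vector spaces, $\mathcal{U}\subseteq\overline{E}^{(k)}$ an open subfunctor and $f\colon\mathcal{U}\to\overline{F}^{(k)}$ a natural transformation such that every $f_\Lambda$ is smooth. Let $n\le k$ and let $x=x_0+\sum_{I\in\mathcal{P}^n_+}x_I\in\mathcal{U}_{\Lambda_n}$ with $x_0\in\mathcal{U}_{\mathbb{R}}$ and $x_I\in\lambda_IE_{|I|\bmod 2}$. Then $$f_{\Lambda_n}(x)=f_{\Lambda_n}(x_0)+\sum_{I\in\mathcal{P}^n_+}\ \sum_{\omega\in\mathrm{Part}(I)}d^{\ell(\omega)}f_{\Lambda_n}(x_0)(x_{\omega_1},\dots,x_{\omega_{\ell(\omega)}}).$$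
   Context: $\mathcal{P}^n_+$ is the set of nonempty subsets of $\{1,\dots,n\}$. For a finite set $I$, $\mathrm{Part}(I)$ is the set of partitions $\omega=\{\omega_1,\dots,\omega_\ell\}$ of $I$ into nonempty pairwise disjoint subsets, $\ell(\omega)=\ell$ its length (order of the blocks is irrelevant since $d^\ell f$ is symmetric). Grassmann algebras $\Lambda_n=\mathbb{R}[\lambda_1..\lambda_n]$ (anticommuting generators, $\lambda_I=\lambda_{i_1}\cdots\lambda_{i_r}$ for $I=\{i_1<\dots<i_r\}$), category $\mathbf{Gr}^{(k)}$ of $\Lambda_0,\dots,\Lambda_k$ with parity-preserving unital homomorphisms. For a locally convex super vector space $E=E_0\oplus E_1$: $\overline{E}^{(k)}_\Lambda=(E_0\otimes\Lambda_{\bar0})\oplus(E_1\otimes\Lambda_{\bar1})=\prod_I\lambda_IE_{|I|\bmod2}$, functorial via $\mathrm{id}\otimes\varrho$, with $\overline{E}_{\mathbb{R}}=E_0\subseteq\overline{E}_{\Lambda_n}$. Open subfunctor: open sets $\mathcal{U}_\Lambda$ stable under the $\overline{E}^{(k)}_\varrho$. Smoothness is Bastiani smoothness, $d^\ell$ iterated directional derivatives. *)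

theory Defs
  imports "HOL-Analysis.Analysis" "HOL-Library.Disjoint_Sets" "HOL-Library.Extended_Nat"
begin

section \<open>Locally convex (Hausdorff) spaces\<close>

definition lcs :: "'a::{real_vector,t2_space} itself \<Rightarrow> bool" where
  "lcs _ \<longleftrightarrow>
     continuous_on UNIV (\<lambda>p::'a \<times> 'a. fst p + snd p) \<and>
     continuous_on UNIV (\<lambda>p::real \<times> 'a. fst p *\<^sub>R snd p) \<and>
     (\<forall>W::'a set. open W \<and> 0 \<in> W \<longrightarrow> (\<exists>C. open C \<and> convex C \<and> 0 \<in> C \<and> C \<subseteq> W))"

section \<open>Pointwise vector operations on function spaces\<close>

definition vadd :: "('i \<Rightarrow> 'a::real_vector) \<Rightarrow> ('i \<Rightarrow> 'a) \<Rightarrow> 'i \<Rightarrow> 'a" where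
  "vadd x y = (\<lambda>I. x I + y I)"
definition vsub :: "('i \<Rightarrow> 'a::real_vector) \<Rightarrow> ('i \<Rightarrow> 'a) \<Rightarrow> 'i \<Rightarrow> 'a" where
  "vsub x y = (\<lambda>I. x I - y I)"
definition vsc :: "real \<Rightarrow> ('i \<Rightarrow> 'a::real_vector) \<Rightarrow> 'i \<Rightarrow> 'a" where
  "vsc c x = (\<lambda>I. c *\<^sub>R x I)"

section \<open>Bastiani calculus (iterated directional derivatives)\<close>

text \<open>Directions are given as a sequence h :: nat => X; the l-th iterated derivative
  uses h 0, ..., h (l-1).  bder g l h x is d^l g(x)(h 0, ..., h (l-1)).\<close>

fun bder :: "(('i \<Rightarrow> 'a::real_vector) \<Rightarrow> ('j \<Rightarrow> 'b::{real_vector,topological_space}))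
    \<Rightarrow> nat \<Rightarrow> (nat \<Rightarrow> 'i \<Rightarrow> 'a) \<Rightarrow> ('i \<Rightarrow> 'a) \<Rightarrow> ('j \<Rightarrow> 'b)" where
  "bder g 0 h x = g x"
| "bder g (Suc l) h x =
     (THE v. ((\<lambda>t::real. vsc (1 / t) (vsub (bder g l h (vadd x (vsc t (h l)))) (bder g l h x)))
               \<longlongrightarrow> v) (at 0))"

definition dirs :: "('i \<Rightarrow> 'a::real_vector) set \<Rightarrow> nat \<Rightarrow> (nat \<Rightarrow> 'i \<Rightarrow> 'a) set" where
  "dirs S l = {h. (\<forall>i<l. h i \<in> S) \<and> (\<forall>i\<ge>l. h i = (\<lambda>_. 0))}"

text \<open>Bastiani smoothness of g on U, where U is an open subset of the (linear subspace) S
  with the subspace topology: all iterated directional derivatives exist and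
  (x, h_1..h_l) |-> d^l g(x)(h_1..h_l) is continuous on U x S^l.\<close>

definition bsmooth :: "('i \<Rightarrow> 'a::{real_vector,topological_space}) set \<Rightarrow> ('i \<Rightarrow> 'a) set
    \<Rightarrow> (('i \<Rightarrow> 'a) \<Rightarrow> ('j \<Rightarrow> 'b::{real_vector,topological_space})) \<Rightarrow> bool" where
  "bsmooth S U g \<longleftrightarrow> U \<subseteq> S \<and>
     (\<forall>l. (\<forall>x\<in>U. \<forall>h\<in>dirs S (Suc l).
             ((\<lambda>t::real. vsc (1 / t) (vsub (bder g l h (vadd x (vsc t (h l)))) (bder g l h x)))
               \<longlongrightarrow> bder g (Suc l) h x) (at 0)) \<and>
          continuous_on (U \<times> dirs S l) (\<lambda>p. bder g l (snd p) (fst p)))"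

section \<open>Grassmann algebras Lambda_n\<close>

text \<open>An element of Lambda_n is its coefficient family (a_I), I subset of {1..n}.\<close>

definition grass :: "nat \<Rightarrow> (nat set \<Rightarrow> real) set" where
  "grass n = {a. \<forall>I. \<not> I \<subseteq> {1..n} \<longrightarrow> a I = 0}"

definition gb :: "nat set \<Rightarrow> nat set \<Rightarrow> real" where
  "gb I = (\<lambda>J. if J = I then 1 else 0)"

definition gone :: "nat set \<Rightarrow> real" where
  "gone = gb {}"

text \<open>lambda_I lambda_J = gsign I J lambda_(I union J) for disjoint I, J.\<close>
definition gsign :: "nat set \<Rightarrow> nat set \<Rightarrow> real" where
  "gsign I J = (-1) ^ card {(i, j). i \<in> I \<and> j \<in> J \<and> j < i}"

definition gmul :: "(nat set \<Rightarrow> real) \<Rightarrow> (nat set \<Rightarrow> real) \<Rightarrow> nat set \<Rightarrow> real" where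
  "gmul a b = (\<lambda>K. \<Sum>I\<in>Pow K. gsign I (K - I) * a I * b (K - I))"

definition geven :: "nat \<Rightarrow> (nat set \<Rightarrow> real) set" where
  "geven n = {a \<in> grass n. \<forall>I. odd (card I) \<longrightarrow> a I = 0}"

definition godd :: "nat \<Rightarrow> (nat set \<Rightarrow> real) set" where
  "godd n = {a \<in> grass n. \<forall>I. even (card I) \<longrightarrow> a I = 0}"

text \<open>Morphisms Lambda_n -> Lambda_m of Gr: parity-preserving unital algebra homomorphisms.\<close>
definition ghom :: "nat \<Rightarrow> nat \<Rightarrow> ((nat set \<Rightarrow> real) \<Rightarrow> (nat set \<Rightarrow> real)) \<Rightarrow> bool" where
  "ghom n m \<rho> \<longleftrightarrow>
     (\<forall>a\<in>grass n. \<rho> a \<in> grass m) \<and>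
     (\<forall>a\<in>grass n. \<forall>b\<in>grass n. \<rho> (vadd a b) = vadd (\<rho> a) (\<rho> b)) \<and>
     (\<forall>c. \<forall>a\<in>grass n. \<rho> (vsc c a) = vsc c (\<rho> a)) \<and>
     (\<forall>a\<in>grass n. \<forall>b\<in>grass n. \<rho> (gmul a b) = gmul (\<rho> a) (\<rho> b)) \<and>
     \<rho> gone = gone \<and>
     (\<forall>a\<in>geven n. \<rho> a \<in> geven m) \<and>
     (\<forall>a\<in>godd n. \<rho> a \<in> godd m)"

section \<open>The functor E-bar for a super vector space E = E_0 (+) E_1\<close>

text \<open>E-bar_(Lambda_n) = prod_I lambda_I E_(|I| mod 2), an element being the family (x_I),
  with x_I in E_0 x {0} for |I| even and in {0} x E_1 for |I| odd.\<close>

definition sbar :: "nat \<Rightarrow> (nat set \<Rightarrow> ('a::zero) \<times> ('b::zero)) set" where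
  "sbar n = {x. \<forall>I. (\<not> I \<subseteq> {1..n} \<longrightarrow> x I = 0) \<and>
                    (even (card I) \<longrightarrow> snd (x I) = 0) \<and>
                    (odd (card I) \<longrightarrow> fst (x I) = 0)}"

text \<open>E-bar_rho = id tensor rho.\<close>
definition barmap :: "nat \<Rightarrow> ((nat set \<Rightarrow> real) \<Rightarrow> (nat set \<Rightarrow> real))
    \<Rightarrow> (nat set \<Rightarrow> ('a::real_vector) \<times> ('b::real_vector)) \<Rightarrow> nat set \<Rightarrow> 'a \<times> 'b" where
  "barmap n \<rho> x = (\<lambda>J. \<Sum>I\<in>Pow {1..n}. \<rho> (gb I) J *\<^sub>R x I)"

text \<open>Open subfunctor of E-bar^(k) (objects Lambda_0..Lambda_k, k possibly infinite).\<close>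
definition open_subfunctor :: "enat \<Rightarrow> (nat \<Rightarrow> (nat set \<Rightarrow> ('a::{real_vector,topological_space}) \<times> ('b::{real_vector,topological_space})) set) \<Rightarrow> bool" where
  "open_subfunctor k U \<longleftrightarrow>
     (\<forall>n. enat n \<le> k \<longrightarrow> U n \<subseteq> sbar n \<and> openin (top_of_set (sbar n)) (U n)) \<and>
     (\<forall>n m \<rho>. enat n \<le> k \<longrightarrow> enat m \<le> k \<longrightarrow> ghom n m \<rho> \<longrightarrow> barmap n \<rho> ` U n \<subseteq> U m)"

text \<open>Natural transformation f : U -> F-bar^(k).\<close>
definition nat_trans :: "enat \<Rightarrow> (nat \<Rightarrow> (nat set \<Rightarrow> ('a::real_vector) \<times> ('b::real_vector)) set)
    \<Rightarrow> (nat \<Rightarrow> (nat set \<Rightarrow> 'a \<times> 'b) \<Rightarrow> (nat set \<Rightarrow> ('c::real_vector) \<times> ('d::real_vector))) \<Rightarrow> bool" where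
  "nat_trans k U f \<longleftrightarrow>
     (\<forall>n. enat n \<le> k \<longrightarrow> (\<forall>x\<in>U n. f n x \<in> sbar n)) \<and>
     (\<forall>n m \<rho> x. enat n \<le> k \<longrightarrow> enat m \<le> k \<longrightarrow> ghom n m \<rho> \<longrightarrow> x \<in> U n \<longrightarrow>
        f m (barmap n \<rho> x) = barmap n \<rho> (f n x))"

section \<open>Components of x\<close>

definition comp0 :: "(nat set \<Rightarrow> 'a::zero) \<Rightarrow> nat set \<Rightarrow> 'a" where
  "comp0 x = (\<lambda>J. if J = {} then x {} else 0)"

definition compI :: "(nat set \<Rightarrow> 'a::zero) \<Rightarrow> nat set \<Rightarrow> nat set \<Rightarrow> 'a" where
  "compI x I = (\<lambda>J. if J = I then x I else 0)"

text \<open>Directions (x_omega_1, ..., x_omega_l) for a partition omega, blocks in an arbitrary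
  (fixed) order -- irrelevant since d^l f is symmetric.\<close>
definition blockdirs :: "(nat set \<Rightarrow> 'a::zero) \<Rightarrow> nat set set \<Rightarrow> nat \<Rightarrow> nat set \<Rightarrow> 'a" where
  "blockdirs x \<omega> = (let bs = (SOME bs. distinct bs \<and> set bs = \<omega>)
                    in (\<lambda>i. if i < length bs then compI x (bs ! i) else (\<lambda>_. 0)))"

end

theory Submission
  imports Defs
begin


lemma lcs_scale_tendsto:
  fixes v :: "'z \<Rightarrow> 'a::{real_vector,t2_space}"
  assumes "lcs TYPE('a)" "(c \<longlongrightarrow> c0) F" "(v \<longlongrightarrow> v0) F"
  shows "((\<lambda>z. c z *\<^sub>R v z) \<longlongrightarrow> c0 *\<^sub>R v0) F"
proof -
  have "continuous_on UNIV (\<lambda>p::real \<times> 'a. fst p *\<^sub>R snd p)" using assms(1) unfolding lcs_def by blast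
  then have "isCont (\<lambda>p::real \<times> 'a. fst p *\<^sub>R snd p) (c0, v0)"
    using continuous_on_eq_continuous_at by blast
  from isCont_tendsto_compose[OF this tendsto_Pair[OF assms(2,3)]] show ?thesis by simp
qed

lemma lcs_add_tendsto:
  fixes u v :: "'z \<Rightarrow> 'a::{real_vector,t2_space}"
  assumes "lcs TYPE('a)" "(u \<longlongrightarrow> u0) F" "(v \<longlongrightarrow> v0) F"
  shows "((\<lambda>z. u z + v z) \<longlongrightarrow> u0 + v0) F"
proof -
  have "continuous_on UNIV (\<lambda>p::'a \<times> 'a. fst p + snd p)" using assms(1) unfolding lcs_def by blast
  then have "isCont (\<lambda>p::'a \<times> 'a. fst p + snd p) (u0, v0)"
    using continuous_on_eq_continuous_at by blast
  from isCont_tendsto_compose[OF this tendsto_Pair[OF assms(2,3)]] show ?thesis by simp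
qed

definition plcs :: "('a::{real_vector,topological_space}) itself \<Rightarrow> bool" where
  "plcs _ \<longleftrightarrow> (\<forall>(F::real filter) c c0 (v::real\<Rightarrow>'a) v0. (c \<longlongrightarrow> c0) F \<longrightarrow> (v \<longlongrightarrow> v0) F \<longrightarrow> ((\<lambda>z. c z *\<^sub>R v z) \<longlongrightarrow> c0 *\<^sub>R v0) F) \<and>
     (\<forall>(F::real filter) (u::real\<Rightarrow>'a) u0 v v0. (u \<longlongrightarrow> u0) F \<longrightarrow> (v \<longlongrightarrow> v0) F \<longrightarrow> ((\<lambda>z. u z + v z) \<longlongrightarrow> u0 + v0) F)"

lemma plcs_pair:
  assumes "lcs TYPE('a::{real_vector,t2_space})" "lcs TYPE('b::{real_vector,t2_space})"
  shows "plcs TYPE('a \<times> 'b)"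
  unfolding plcs_def
proof (intro conjI allI impI)
  fix F :: "real filter" and c :: "real \<Rightarrow> real" and c0 and v :: "real \<Rightarrow> 'a \<times> 'b" and v0
  assume "(c \<longlongrightarrow> c0) F" "(v \<longlongrightarrow> v0) F"
  then have "((\<lambda>z. c z *\<^sub>R fst (v z)) \<longlongrightarrow> c0 *\<^sub>R fst v0) F" "((\<lambda>z. c z *\<^sub>R snd (v z)) \<longlongrightarrow> c0 *\<^sub>R snd v0) F"
    by (auto intro!: lcs_scale_tendsto assms tendsto_fst tendsto_snd)
  from tendsto_Pair[OF this] show "((\<lambda>z. c z *\<^sub>R v z) \<longlongrightarrow> c0 *\<^sub>R v0) F" by (simp add: scaleR_prod_def)
next
  fix F :: "real filter" and u :: "real \<Rightarrow> 'a \<times> 'b" and u0 and v :: "real \<Rightarrow> 'a \<times> 'b" and v0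
  assume "(u \<longlongrightarrow> u0) F" "(v \<longlongrightarrow> v0) F"
  then have "((\<lambda>z. fst (u z) + fst (v z)) \<longlongrightarrow> fst u0 + fst v0) F" "((\<lambda>z. snd (u z) + snd (v z)) \<longlongrightarrow> snd u0 + snd v0) F"
    by (auto intro!: lcs_add_tendsto assms tendsto_fst tendsto_snd)
  from tendsto_Pair[OF this] show "((\<lambda>z. u z + v z) \<longlongrightarrow> u0 + v0) F" by (simp add: plus_prod_def)
qed

lemma plcs_scale: "plcs TYPE('a::{real_vector,topological_space}) \<Longrightarrow> (c \<longlongrightarrow> c0) F \<Longrightarrow> ((v::real\<Rightarrow>'a) \<longlongrightarrow> v0) F \<Longrightarrow> ((\<lambda>z. c z *\<^sub>R v z) \<longlongrightarrow> c0 *\<^sub>R v0) F"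
  unfolding plcs_def by blast
lemma plcs_add: "plcs TYPE('a::{real_vector,topological_space}) \<Longrightarrow> ((u::real\<Rightarrow>'a) \<longlongrightarrow> u0) F \<Longrightarrow> (v \<longlongrightarrow> v0) F \<Longrightarrow> ((\<lambda>z. u z + v z) \<longlongrightarrow> u0 + v0) F"
  unfolding plcs_def by blast

lemma fun_tendsto_iff:
  fixes f :: "'z \<Rightarrow> 'i \<Rightarrow> 'b::topological_space"
  shows "(f \<longlongrightarrow> l) F \<longleftrightarrow> (\<forall>i. ((\<lambda>z. f z i) \<longlongrightarrow> l i) F)"
proof -
  have "(f \<longlongrightarrow> l) F \<longleftrightarrow> limitin (product_topology (\<lambda>i. euclidean) UNIV) f l F"
    by (simp add: euclidean_product_topology)
  also have "\<dots> \<longleftrightarrow> (\<forall>i. ((\<lambda>z. f z i) \<longlongrightarrow> l i) F)"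
    by (simp add: limitin_componentwise)
  finally show ?thesis .
qed

lemma fun_tendsto_unique:
  fixes f :: "'z \<Rightarrow> 'i \<Rightarrow> 'b::t2_space"
  assumes "F \<noteq> bot" "(f \<longlongrightarrow> a) F" "(f \<longlongrightarrow> b) F"
  shows "a = b"
proof
  fix i
  from assms(2,3) have "((\<lambda>z. f z i) \<longlongrightarrow> a i) F" "((\<lambda>z. f z i) \<longlongrightarrow> b i) F"
    by (auto simp: fun_tendsto_iff)
  then show "a i = b i" using tendsto_unique assms(1) by blast
qed




lemma zero_deriv_const:
  fixes \<phi> :: "real \<Rightarrow> 'a::{real_vector,t2_space}"
  assumes lcs: "lcs TYPE('a)" and ab: "a \<le> b"
    and der: "\<And>r. r\<in>{a..b} \<Longrightarrow> ((\<lambda>h. (1/h) *\<^sub>R (\<phi>(r+h) - \<phi> r)) \<longlongrightarrow> 0) (at 0)"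
  shows "\<phi> b = \<phi> a"
proof (rule ccontr)
  assume ne: "\<phi> b \<noteq> \<phi> a"
  then have "\<phi> b - \<phi> a \<noteq> 0" by simp
  from hausdorff[OF this] obtain U W where UW: "open U" "open W" "\<phi> b - \<phi> a \<in> U" "0 \<in> W" "U \<inter> W = {}"
    by blast
  obtain C where C: "open C" "convex C" "0 \<in> C" "C \<subseteq> W"
    using lcs UW unfolding lcs_def by blast
  define inC where "inC \<equiv> \<lambda>(\<alpha>::real) v. \<exists>c\<in>C. v = \<alpha> *\<^sub>R c"
  have F1: "inC (\<alpha>+\<beta>) (u+v)" if pr: "inC \<alpha> u" "inC \<beta> v" "\<alpha>>0" "\<beta>>0" for \<alpha> \<beta> u v
  proof -
    obtain c1 c2 where c: "c1\<in>C" "c2\<in>C" "u = \<alpha> *\<^sub>R c1" "v = \<beta> *\<^sub>R c2" using pr(1,2) unfolding inC_def by blast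
    have "(\<alpha>/(\<alpha>+\<beta>)) *\<^sub>R c1 + (\<beta>/(\<alpha>+\<beta>)) *\<^sub>R c2 \<in> C"
      using C(2) c pr unfolding convex_def by (auto simp: add_divide_distrib[symmetric])
    moreover have "u + v = (\<alpha>+\<beta>) *\<^sub>R ((\<alpha>/(\<alpha>+\<beta>)) *\<^sub>R c1 + (\<beta>/(\<alpha>+\<beta>)) *\<^sub>R c2)"
      using pr c by (simp add: scaleR_add_right)
    ultimately show ?thesis unfolding inC_def by blast
  qed
  have F2: "inC \<beta> u" if pr: "inC \<alpha> u" "0<\<alpha>" "\<alpha>\<le>\<beta>" for \<alpha> \<beta> u
  proof -
    obtain c where c: "c\<in>C" "u = \<alpha> *\<^sub>R c" using pr(1) unfolding inC_def by blast
    have "(\<alpha>/\<beta>) *\<^sub>R c + (1 - \<alpha>/\<beta>) *\<^sub>R 0 \<in> C"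
      by (rule convexD[OF C(2) c(1) C(3)]) (use pr in \<open>auto simp: field_simps\<close>)
    moreover have "u = \<beta> *\<^sub>R ((\<alpha>/\<beta>) *\<^sub>R c + (1 - \<alpha>/\<beta>) *\<^sub>R 0)" using pr c by simp
    ultimately show ?thesis unfolding inC_def by blast
  qed
  have F3: "inC \<alpha> 0" for \<alpha> using C(3) unfolding inC_def by (intro bexI[of _ 0]) auto
  have DS: "\<exists>\<epsilon>>0. \<forall>h. 0<h \<and> h<\<epsilon> \<longrightarrow> inC (h*\<mu>) (\<phi>(r+h) - \<phi> r) \<and> inC (h*\<mu>) (\<phi> r - \<phi>(r-h))"
    if r: "r\<in>{a..b}" and \<mu>: "\<mu>>0" for r \<mu>
  proof -
    have "((\<lambda>h. (1/\<mu>) *\<^sub>R ((1/h) *\<^sub>R (\<phi>(r+h) - \<phi> r))) \<longlongrightarrow> (1/\<mu>) *\<^sub>R 0) (at 0)"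
      by (rule lcs_scale_tendsto[OF lcs tendsto_const der[OF r]])
    then have "eventually (\<lambda>h. (1/\<mu>) *\<^sub>R ((1/h) *\<^sub>R (\<phi>(r+h) - \<phi> r)) \<in> C) (at 0)"
      using C(1,3) by (auto dest: topological_tendstoD)
    then obtain \<epsilon> where \<epsilon>: "\<epsilon>>0" "\<And>h. h \<noteq> 0 \<Longrightarrow> dist h 0 < \<epsilon> \<Longrightarrow> (1/\<mu>) *\<^sub>R ((1/h) *\<^sub>R (\<phi>(r+h) - \<phi> r)) \<in> C"
      unfolding eventually_at by auto
    show ?thesis
    proof (intro exI[of _ \<epsilon>] conjI allI impI)
      show "\<epsilon>>0" by fact
      fix h :: real assume h: "0<h \<and> h<\<epsilon>"
      then have "(1/\<mu>) *\<^sub>R ((1/h) *\<^sub>R (\<phi>(r+h) - \<phi> r)) \<in> C" by (intro \<epsilon>(2)) auto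
      moreover have "\<phi>(r+h) - \<phi> r = (h*\<mu>) *\<^sub>R ((1/\<mu>) *\<^sub>R ((1/h) *\<^sub>R (\<phi>(r+h) - \<phi> r)))"
        using h \<mu> by simp
      ultimately show "inC (h*\<mu>) (\<phi>(r+h) - \<phi> r)" unfolding inC_def by blast
      have "(1/\<mu>) *\<^sub>R ((1/(-h)) *\<^sub>R (\<phi>(r+(-h)) - \<phi> r)) \<in> C" by (rule \<epsilon>(2)) (use h in auto)
      moreover have "\<phi> r - \<phi>(r-h) = (h*\<mu>) *\<^sub>R ((1/\<mu>) *\<^sub>R ((1/(-h)) *\<^sub>R (\<phi>(r+(-h)) - \<phi> r)))"
        using h \<mu> by (simp add: algebra_simps)
      ultimately show "inC (h*\<mu>) (\<phi> r - \<phi>(r-h))" unfolding inC_def by blast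
    qed
  qed
  have main: "inC (\<mu>*(b-a)+\<eta>) (\<phi> b - \<phi> a)" if \<mu>: "\<mu>>0" and \<eta>: "\<eta>>0" for \<mu> \<eta>
  proof -
    define P where "P \<equiv> \<lambda>s. inC (\<mu>*(s-a)+\<eta>) (\<phi> s - \<phi> a)"
    define T where "T = {s\<in>{a..b}. \<forall>s'\<in>{a..s}. P s'}"
    define \<sigma> where "\<sigma> = Sup T"
    have aT: "a \<in> T" unfolding T_def P_def using ab F3 by auto
    have bdd: "bdd_above T" unfolding T_def by (rule bdd_aboveI[of _ b]) auto
    have a\<sigma>: "a \<le> \<sigma>" unfolding \<sigma>_def using aT bdd by (rule cSup_upper)
    have \<sigma>b: "\<sigma> \<le> b" unfolding \<sigma>_def using aT by (intro cSup_least) (auto simp: T_def)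
    have below: "P s'" if pr: "a \<le> s'" "s' < \<sigma>" for s'
    proof -
      obtain s where "s\<in>T" "s' < s" using pr less_cSup_iff[of T s'] aT bdd unfolding \<sigma>_def by auto
      then show ?thesis using pr unfolding T_def by auto
    qed
    have P\<sigma>: "P \<sigma>"
    proof (cases "\<sigma> = a")
      case True then show ?thesis using F3 unfolding P_def by simp
    next
      case False
      then have gt: "\<sigma> > a" using a\<sigma> by simp
      obtain \<epsilon> where \<epsilon>: "\<epsilon>>0" "\<And>h. 0<h \<and> h<\<epsilon> \<Longrightarrow> inC (h*\<mu>) (\<phi>(\<sigma>+h) - \<phi> \<sigma>) \<and> inC (h*\<mu>) (\<phi> \<sigma> - \<phi>(\<sigma>-h))"
        using DS[of \<sigma> \<mu>] a\<sigma> \<sigma>b \<mu> by auto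
      define t where "t = min (\<epsilon>/2) ((\<sigma>-a)/2)"
      have t: "0<t" "t<\<epsilon>" "a \<le> \<sigma> - t" "\<sigma> - t < \<sigma>" using \<epsilon> gt unfolding t_def by (auto simp: min_def field_simps)
      have "P (\<sigma>-t)" using below t by auto
      moreover have "inC (t*\<mu>) (\<phi> \<sigma> - \<phi>(\<sigma>-t))" using \<epsilon> t by auto
      ultimately have "inC ((\<mu>*(\<sigma>-t-a)+\<eta>) + t*\<mu>) ((\<phi> (\<sigma>-t) - \<phi> a) + (\<phi> \<sigma> - \<phi>(\<sigma>-t)))"
        unfolding P_def using t \<mu> \<eta> by (intro F1) (auto intro!: add_nonneg_pos mult_nonneg_nonneg)
      then show ?thesis unfolding P_def by (simp add: algebra_simps)
    qed
    have \<sigma>T: "\<sigma> \<in> T" unfolding T_def using a\<sigma> \<sigma>b below P\<sigma>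
      by (auto simp: order.order_iff_strict)
    have "\<sigma> = b"
    proof (rule ccontr)
      assume "\<sigma> \<noteq> b"
      then have lt: "\<sigma> < b" using \<sigma>b by simp
      obtain \<epsilon> where \<epsilon>: "\<epsilon>>0" "\<And>h. 0<h \<and> h<\<epsilon> \<Longrightarrow> inC (h*\<mu>) (\<phi>(\<sigma>+h) - \<phi> \<sigma>) \<and> inC (h*\<mu>) (\<phi> \<sigma> - \<phi>(\<sigma>-h))"
        using DS[of \<sigma> \<mu>] a\<sigma> \<sigma>b \<mu> by auto
      define h' where "h' = min (\<epsilon>/2) (b-\<sigma>)"
      have h': "0<h'" "h'<\<epsilon>" "\<sigma>+h' \<le> b" using \<epsilon> lt unfolding h'_def by (auto simp: min_def field_simps)
      have "\<sigma>+h' \<in> T"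
        unfolding T_def
      proof (intro CollectI conjI ballI)
        show "\<sigma> + h' \<in> {a..b}" using h' a\<sigma> by auto
        fix s' assume s': "s' \<in> {a..\<sigma>+h'}"
        show "P s'"
        proof (cases "s' \<le> \<sigma>")
          case True then show ?thesis using \<sigma>T s' unfolding T_def by auto
        next
          case False
          define d where "d = s' - \<sigma>"
          have d: "0<d" "d<\<epsilon>" using False s' h' by (auto simp: d_def)
          have "inC (d*\<mu>) (\<phi>(\<sigma>+d) - \<phi> \<sigma>)" using \<epsilon> d by auto
          with P\<sigma> have "inC ((\<mu>*(\<sigma>-a)+\<eta>) + d*\<mu>) ((\<phi> \<sigma> - \<phi> a) + (\<phi>(\<sigma>+d) - \<phi> \<sigma>))"
            unfolding P_def using d \<mu> \<eta> a\<sigma> by (intro F1) (auto intro!: add_nonneg_pos mult_nonneg_nonneg)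
          then show ?thesis unfolding P_def d_def by (simp add: algebra_simps)
        qed
      qed
      then have "\<sigma>+h' \<le> \<sigma>" unfolding \<sigma>_def using bdd by (rule cSup_upper)
      then show False using h' by simp
    qed
    then show ?thesis using \<sigma>T ab unfolding T_def P_def by auto
  qed
  define \<mu> where "\<mu> = 1/(2*(b-a+1))"
  have \<mu>: "\<mu>>0" "\<mu>*(b-a) \<le> 1/2" using ab by (auto simp: \<mu>_def field_simps)
  have "inC (\<mu>*(b-a)+1/2) (\<phi> b - \<phi> a)" using main[OF \<mu>(1)] by simp
  moreover have "0 < \<mu>*(b-a)+1/2" using \<mu> ab by (intro add_nonneg_pos) auto
  moreover have "\<mu>*(b-a)+1/2 \<le> 1" using \<mu> by simp
  ultimately have "inC 1 (\<phi> b - \<phi> a)" using F2 by blast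
  then have "\<phi> b - \<phi> a \<in> W" using C unfolding inC_def by auto
  then show False using UW by auto
qed

lemma deriv_const_affine:
  fixes \<phi> :: "real \<Rightarrow> 'a::{real_vector,t2_space}"
  assumes lcs: "lcs TYPE('a)" and ab: "a \<le> b"
    and der: "\<And>r. r\<in>{a..b} \<Longrightarrow> ((\<lambda>h. (1/h) *\<^sub>R (\<phi>(r+h) - \<phi> r)) \<longlongrightarrow> c) (at 0)"
  shows "\<phi> b = \<phi> a + (b-a) *\<^sub>R c"
proof -
  define \<psi> where "\<psi> = (\<lambda>r. \<phi> r + (-r) *\<^sub>R c)"
  have "((\<lambda>h. (1/h) *\<^sub>R (\<psi>(r+h) - \<psi> r)) \<longlongrightarrow> 0) (at 0)" if r: "r\<in>{a..b}" for r
  proof -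
    have "((\<lambda>h. (1/h) *\<^sub>R (\<phi>(r+h) - \<phi> r) + (-1) *\<^sub>R c) \<longlongrightarrow> c + (-1) *\<^sub>R c) (at 0)"
      by (intro lcs_add_tendsto[OF lcs der[OF r]] tendsto_const)
    moreover have "eventually (\<lambda>h. (1/h) *\<^sub>R (\<phi>(r+h) - \<phi> r) + (-1) *\<^sub>R c = (1/h) *\<^sub>R (\<psi>(r+h) - \<psi> r)) (at 0)"
      unfolding eventually_at by (intro exI[of _ 1]) (auto simp: \<psi>_def algebra_simps)
    ultimately show ?thesis by (simp add: tendsto_cong)
  qed
  then have "\<psi> b = \<psi> a" using zero_deriv_const[OF lcs ab] by blast
  then show ?thesis unfolding \<psi>_def by (simp add: algebra_simps)
qed




lemma bder_cong_dirs:
  "(\<And>i. i < l \<Longrightarrow> h i = h' i) \<Longrightarrow> bder g l h x = bder g l h' x"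
proof (induction l arbitrary: x)
  case 0 then show ?case by simp
next
  case (Suc l)
  have "\<And>y. bder g l h y = bder g l h' y" using Suc by auto
  moreover have "h l = h' l" using Suc by auto
  ultimately show ?case by simp
qed

lemma bder_tendsto:
  assumes sm: "bsmooth S U g" and xU: "x \<in> U" and hS: "\<And>i. i \<le> l \<Longrightarrow> h i \<in> S"
  shows "((\<lambda>t::real. vsc (1 / t) (vsub (bder g l h (vadd x (vsc t (h l)))) (bder g l h x)))
               \<longlongrightarrow> bder g (Suc l) h x) (at 0)"
proof -
  define h' where "h' = (\<lambda>i. if i \<le> l then h i else (\<lambda>_. 0))"
  have "h' \<in> dirs S (Suc l)" unfolding dirs_def h'_def using hS by auto
  then have "((\<lambda>t::real. vsc (1 / t) (vsub (bder g l h' (vadd x (vsc t (h' l)))) (bder g l h' x)))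
               \<longlongrightarrow> bder g (Suc l) h' x) (at 0)" using sm xU unfolding bsmooth_def by blast
  moreover have "\<And>y. bder g l h' y = bder g l h y" by (rule bder_cong_dirs) (auto simp: h'_def)
  moreover have "bder g (Suc l) h' x = bder g (Suc l) h x" by (rule bder_cong_dirs) (auto simp: h'_def)
  moreover have "h' l = h l" by (simp add: h'_def)
  ultimately show ?thesis by simp
qed

lemma bder_cont:
  assumes sm: "bsmooth S U g"
  shows "continuous_on (U \<times> dirs S l) (\<lambda>p. bder g l (snd p) (fst p))"
  using sm unfolding bsmooth_def by blast

definition rh :: "nat \<Rightarrow> (nat \<Rightarrow> real) \<Rightarrow> (nat set \<Rightarrow> 'a::real_vector) \<Rightarrow> nat set \<Rightarrow> 'a" where
  "rh n s y = (\<lambda>J. if J \<subseteq> {1..n} then (\<Prod>i\<in>J. s i) *\<^sub>R y J else 0)"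

lemma rh_vadd: "rh n s (vadd a b) = vadd (rh n s a) (rh n s b)"
  by (auto simp: rh_def vadd_def scaleR_add_right)
lemma rh_vsc: "rh n s (vsc c a) = vsc c (rh n s a)"
  by (auto simp: rh_def vsc_def)
lemma rh_vsub: "rh n s (vsub a b) = vsub (rh n s a) (rh n s b)"
  by (auto simp: rh_def vsub_def scaleR_diff_right)

lemma sbar_lin: "y \<in> sbar n \<Longrightarrow> z \<in> sbar n \<Longrightarrow> vadd y (vsc r z) \<in> sbar n"
  by (auto simp: sbar_def vadd_def vsc_def)




locale SF =
  fixes g :: "(nat set \<Rightarrow> 'e0::{real_vector,t2_space} \<times> 'e1::{real_vector,t2_space}) \<Rightarrow> (nat set \<Rightarrow> 'f0::{real_vector,t2_space} \<times> 'f1::{real_vector,t2_space})"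
    and UU :: "(nat set \<Rightarrow> 'e0 \<times> 'e1) set" and n :: nat and x :: "nat set \<Rightarrow> 'e0 \<times> 'e1"
  assumes plcsE: "plcs TYPE('e0 \<times> 'e1)" and plcsF: "plcs TYPE('f0 \<times> 'f1)"
    and sm: "bsmooth (sbar n) UU g"
    and opn: "openin (top_of_set (sbar n)) UU"
    and natU: "\<And>s y. y \<in> UU \<Longrightarrow> rh n s y \<in> UU"
    and natg: "\<And>s y. y \<in> UU \<Longrightarrow> g (rh n s y) = rh n s (g y)"
    and xU: "x \<in> UU"
begin

lemma UnS: "UU \<subseteq> sbar n" using sm unfolding bsmooth_def by blast
lemma xS: "x \<in> sbar n" using xU UnS by blast

definition "Ps = Pow {1..n} - {{}}"
definition pt :: "(nat set \<Rightarrow> real) \<Rightarrow> nat set \<Rightarrow> 'e0 \<times> 'e1" where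
  "pt t = (\<lambda>J. (if J = {} then 1 else t J) *\<^sub>R x J)"
definition e :: "nat set \<Rightarrow> nat set \<Rightarrow> 'e0 \<times> 'e1" where "e K = compI x K"
definition dl :: "nat set list \<Rightarrow> nat \<Rightarrow> nat set \<Rightarrow> 'e0 \<times> 'e1" where
  "dl L = (\<lambda>i. if i < length L then e (L!i) else (\<lambda>_. 0))"
definition B :: "nat set list \<Rightarrow> (nat set \<Rightarrow> real) \<Rightarrow> nat set \<Rightarrow> 'f0 \<times> 'f1" where
  "B L t = bder g (length L) (dl L) (pt t)"
definition st :: "(nat \<Rightarrow> real) \<Rightarrow> (nat set \<Rightarrow> real) \<Rightarrow> nat set \<Rightarrow> real" where
  "st s t = (\<lambda>K. (\<Prod>i\<in>K. s i) * t K)"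

lemma finite_Ps: "finite Ps" unfolding Ps_def by auto
lemma Ps_fin: "K \<in> Ps \<Longrightarrow> finite K" unfolding Ps_def by (auto intro: finite_subset)

lemma x_out: "\<not> J \<subseteq> {1..n} \<Longrightarrow> x J = 0" using xS unfolding sbar_def by auto

lemma pt_S: "pt t \<in> sbar n"
  using xS unfolding sbar_def pt_def by auto

lemma pt_cong: "(\<And>K. K \<in> Ps \<Longrightarrow> t K = t' K) \<Longrightarrow> pt t = pt t'"
proof (rule ext)
  fix J
  assume a: "\<And>K. K \<in> Ps \<Longrightarrow> t K = t' K"
  show "pt t J = pt t' J"
  proof (cases "J \<in> Ps")
    case True then show ?thesis using a by (simp add: pt_def)
  next
    case False
    then have "J = {} \<or> \<not> J \<subseteq> {1..n}" unfolding Ps_def by auto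
    then show ?thesis unfolding pt_def using x_out by auto
  qed
qed

lemma e_S: "e K \<in> sbar n"
  using xS unfolding sbar_def e_def compI_def by auto

lemma pt_upd: "K \<in> Ps \<Longrightarrow> vadd (pt t) (vsc r (e K)) = pt (t(K := t K + r))"
  unfolding pt_def vadd_def vsc_def e_def compI_def Ps_def by (rule ext) (auto simp: algebra_simps)

lemma rh_pt: "rh n s (pt t) = pt (st s t)"
  unfolding rh_def pt_def st_def by (rule ext) (auto simp: x_out)

lemma rh_e: "K \<in> Ps \<Longrightarrow> rh n s (e K) = vsc (\<Prod>i\<in>K. s i) (e K)"
  unfolding rh_def e_def compI_def vsc_def Ps_def by (rule ext) auto

lemma comp0_pt: "comp0 x = pt (\<lambda>_. 0)"
  unfolding comp0_def pt_def by auto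
lemma x_pt: "pt (\<lambda>_. 1) = x"
  unfolding pt_def by auto

lemma rh_tendsto:
  assumes "(Q \<longlongrightarrow> L) (F::real filter)"
  shows "((\<lambda>r. rh n s (Q r :: nat set \<Rightarrow> 'f0 \<times> 'f1)) \<longlongrightarrow> rh n s L) F"
  unfolding fun_tendsto_iff
proof
  fix J
  have "((\<lambda>r. Q r J) \<longlongrightarrow> L J) F" using assms by (simp add: fun_tendsto_iff)
  then have "((\<lambda>r. (\<Prod>i\<in>J. s i) *\<^sub>R Q r J) \<longlongrightarrow> (\<Prod>i\<in>J. s i) *\<^sub>R L J) F"
    by (intro plcs_scale[OF plcsF] tendsto_const)
  then show "((\<lambda>r. rh n s (Q r) J) \<longlongrightarrow> rh n s L J) F" unfolding rh_def by auto
qed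

lemma vsc_tendsto:
  assumes "(Q \<longlongrightarrow> L) (F::real filter)"
  shows "((\<lambda>r. vsc c (Q r :: nat set \<Rightarrow> 'f0 \<times> 'f1)) \<longlongrightarrow> vsc c L) F"
  unfolding fun_tendsto_iff
proof
  fix J
  have "((\<lambda>r. Q r J) \<longlongrightarrow> L J) F" using assms by (simp add: fun_tendsto_iff)
  then show "((\<lambda>r. vsc c (Q r) J) \<longlongrightarrow> vsc c L J) F" unfolding vsc_def
    by (intro plcs_scale[OF plcsF] tendsto_const)
qed

lemma basis:
  assumes "q \<in> UU"
  shows "\<exists>X. (\<forall>c. open (X c)) \<and> finite {c. X c \<noteq> UNIV} \<and> (\<forall>c. q c \<in> X c) \<and>
             (\<forall>y\<in>sbar n. (\<forall>c. y c \<in> X c) \<longrightarrow> y \<in> UU)"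
proof -
  obtain V where V: "open V" "UU = sbar n \<inter> V" using opn by (auto simp: openin_open)
  then have "openin (product_topology (\<lambda>i. euclidean) UNIV) V" "q \<in> V"
    using assms by (auto simp: open_fun_def)
  from product_topology_open_contains_basis[OF this] obtain X where
    X: "q \<in> (\<Pi>\<^sub>E i\<in>UNIV. X i)" "\<forall>i. openin euclidean (X i)" "finite {i. X i \<noteq> topspace euclidean}"
       "(\<Pi>\<^sub>E i\<in>UNIV. X i) \<subseteq> V" by blast
  show ?thesis
    apply (rule exI[of _ X])
    using X V by (auto simp: PiE_UNIV_domain)
qed

lemma line:
  assumes "q \<in> UU" "h \<in> sbar n"
  shows "\<exists>d>0. \<forall>r. \<bar>r\<bar> < d \<longrightarrow> vadd q (vsc r h) \<in> UU"
proof -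
  obtain X where X: "\<forall>c. open (X c)" "finite {c. X c \<noteq> UNIV}" "\<forall>c. q c \<in> X c"
             "\<forall>y\<in>sbar n. (\<forall>c. y c \<in> X c) \<longrightarrow> y \<in> UU" using basis[OF assms(1)] by blast
  have "\<forall>c\<in>{c. X c \<noteq> UNIV}. eventually (\<lambda>r. q c + r *\<^sub>R h c \<in> X c) (nhds 0)"
  proof
    fix c
    have "((\<lambda>r::real. q c + r *\<^sub>R h c) \<longlongrightarrow> q c + 0 *\<^sub>R h c) (nhds 0)"
      by (intro plcs_add[OF plcsE] plcs_scale[OF plcsE] tendsto_const filterlim_ident)
    then show "eventually (\<lambda>r. q c + r *\<^sub>R h c \<in> X c) (nhds 0)"
      using X by (auto dest: topological_tendstoD)
  qed
  then have "eventually (\<lambda>r. \<forall>c\<in>{c. X c \<noteq> UNIV}. q c + r *\<^sub>R h c \<in> X c) (nhds 0)"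
    using X(2) by (rule eventually_ball_finite[rotated])
  then obtain d where d: "d>0" "\<And>r. dist r 0 < d \<Longrightarrow> \<forall>c\<in>{c. X c \<noteq> UNIV}. q c + r *\<^sub>R h c \<in> X c"
    unfolding eventually_nhds_metric by blast
  show ?thesis
  proof (intro exI[of _ d] conjI allI impI)
    fix r :: real assume "\<bar>r\<bar> < d"
    then have "\<forall>c. vadd q (vsc r h) c \<in> X c" using d by (auto simp: vadd_def vsc_def)
    moreover have "vadd q (vsc r h) \<in> sbar n" using assms UnS by (intro sbar_lin) auto
    ultimately show "vadd q (vsc r h) \<in> UU" using X by blast
  qed (use d in auto)
qed

lemma p0U: "pt (\<lambda>_. 0) \<in> UU"
proof -
  have "rh n (\<lambda>_. 0) x \<in> UU" using natU xU by blast
  also have "rh n (\<lambda>_. 0) x = pt (\<lambda>_. 0)"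
  proof -
    have e: "pt (\<lambda>_. 1) = x" by (simp add: pt_def)
    have "rh n (\<lambda>_. 0) x = rh n (\<lambda>_. 0) (pt (\<lambda>_. 1))" by (simp only: e)
    also have "\<dots> = pt (st (\<lambda>_. 0) (\<lambda>_. 1))" by (rule rh_pt)
    also have "\<dots> = pt (\<lambda>_. 0)"
    proof (rule pt_cong)
      fix K assume K: "K \<in> Ps"
      then have "finite K" "K \<noteq> {}" using Ps_fin by (auto simp: Ps_def)
      then show "st (\<lambda>_. 0) (\<lambda>_. 1) K = 0" by (simp add: st_def card_gt_0_iff)
    qed
    finally show ?thesis .
  qed
  finally show ?thesis .
qed

lemma box_ex: "\<exists>\<delta>>0. \<delta> \<le> 1 \<and> (\<forall>t. (\<forall>K\<in>Ps. \<bar>t K\<bar> < \<delta>) \<longrightarrow> pt t \<in> UU)"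
proof -
  obtain X where X: "\<forall>c. open (X c)" "finite {c. X c \<noteq> UNIV}" "\<forall>c. pt (\<lambda>_. 0) c \<in> X c"
             "\<forall>y\<in>sbar n. (\<forall>c. y c \<in> X c) \<longrightarrow> y \<in> UU" using basis[OF p0U] by blast
  have "\<forall>c\<in>{c. X c \<noteq> UNIV}. eventually (\<lambda>r. pt (\<lambda>_. r) c \<in> X c) (nhds 0)"
  proof
    fix c
    have "((\<lambda>r::real. (if c = {} then 1 else r) *\<^sub>R x c) \<longlongrightarrow> (if c = {} then 1 else 0) *\<^sub>R x c) (nhds 0)"
      by (intro plcs_scale[OF plcsE] tendsto_const) (auto intro: filterlim_ident)
    then have "eventually (\<lambda>r. (if c = {} then 1 else r) *\<^sub>R x c \<in> X c) (nhds 0)"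
      by (rule topological_tendstoD) (use X in \<open>auto simp: pt_def\<close>)
    then show "eventually (\<lambda>r. pt (\<lambda>_. r) c \<in> X c) (nhds 0)"
      unfolding pt_def .
  qed
  then have "eventually (\<lambda>r. \<forall>c\<in>{c. X c \<noteq> UNIV}. pt (\<lambda>_. r) c \<in> X c) (nhds 0)"
    using X(2) by (rule eventually_ball_finite[rotated])
  then obtain d where d: "d>0" "\<And>r. dist r 0 < d \<Longrightarrow> \<forall>c\<in>{c. X c \<noteq> UNIV}. pt (\<lambda>_. r) c \<in> X c"
    unfolding eventually_nhds_metric by blast
  show ?thesis
  proof (intro exI[of _ "min d 1"] conjI allI impI)
    fix t :: "nat set \<Rightarrow> real" assume t: "\<forall>K\<in>Ps. \<bar>t K\<bar> < min d 1"
    have "pt t c \<in> X c" for c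
    proof (cases "X c = UNIV")
      case False
      show ?thesis
      proof (cases "c \<in> Ps")
        case True
        then have "pt t c = pt (\<lambda>_. t c) c" unfolding pt_def Ps_def by auto
        then show ?thesis using d(2)[of "t c"] t True False by auto
      next
        case cP: False
        then have "pt t c = pt (\<lambda>_. 0) c" unfolding pt_def Ps_def using x_out by auto
        then show ?thesis using X by auto
      qed
    qed auto
    then show "pt t \<in> UU" using X pt_S by blast
  qed (use d in auto)
qed

definition "del = (SOME \<delta>. \<delta>>0 \<and> \<delta> \<le> 1 \<and> (\<forall>t. (\<forall>K\<in>Ps. \<bar>t K\<bar> < \<delta>) \<longrightarrow> pt t \<in> UU))"
definition "inbox t \<longleftrightarrow> (\<forall>K\<in>Ps. \<bar>t K\<bar> < del)"

lemma del_ax: "del>0 \<and> del \<le> 1 \<and> (\<forall>t. (\<forall>K\<in>Ps. \<bar>t K\<bar> < del) \<longrightarrow> pt t \<in> UU)"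
  unfolding del_def by (rule someI_ex[OF box_ex])

lemma del: "del > 0" "del \<le> 1" "\<And>t. inbox t \<Longrightarrow> pt t \<in> UU"
  using del_ax unfolding inbox_def by blast+

end



lemma filterlim_mult_const_at0: "(c::real) \<noteq> 0 \<Longrightarrow> filterlim (\<lambda>r. r * c) (at 0) (at 0)"
  unfolding filterlim_at
  by (auto intro!: tendsto_eq_intros simp: eventually_at_filter)

context SF begin

lemma nat_bder:
  "q \<in> UU \<Longrightarrow> (\<And>i. i < l \<Longrightarrow> h i \<in> sbar n) \<Longrightarrow>
    bder g l (\<lambda>i. rh n s (h i)) (rh n s q) = rh n s (bder g l h q)"
proof (induction l arbitrary: q)
  case 0 then show ?case using natg by simp
next
  case (Suc l)
  define Q where "Q = (\<lambda>r. vsc (1/r) (vsub (bder g l h (vadd q (vsc r (h l)))) (bder g l h q)))"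
  have T: "(Q \<longlongrightarrow> bder g (Suc l) h q) (at 0)" unfolding Q_def
    by (rule bder_tendsto[OF sm Suc.prems(1)]) (use Suc.prems in auto)
  obtain d where d: "d>0" "\<And>r. \<bar>r\<bar> < d \<Longrightarrow> vadd q (vsc r (h l)) \<in> UU"
    using line[OF Suc.prems(1), of "h l"] Suc.prems(2) by auto
  have IH: "\<And>q. q \<in> UU \<Longrightarrow> bder g l (\<lambda>i. rh n s (h i)) (rh n s q) = rh n s (bder g l h q)"
    using Suc by auto
  have ev: "eventually (\<lambda>r. rh n s (Q r) = vsc (1/r) (vsub (bder g l (\<lambda>i. rh n s (h i)) (vadd (rh n s q) (vsc r (rh n s (h l))))) (bder g l (\<lambda>i. rh n s (h i)) (rh n s q)))) (at 0)"
    unfolding eventually_at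
  proof (intro exI[of _ d] conjI ballI impI)
    fix r :: real assume "r \<noteq> 0 \<and> dist r 0 < d"
    then have U: "vadd q (vsc r (h l)) \<in> UU" using d by auto
    have eq: "vadd (rh n s q) (vsc r (rh n s (h l))) = rh n s (vadd q (vsc r (h l)))" by (simp add: rh_vadd rh_vsc)
    show "rh n s (Q r) = vsc (1/r) (vsub (bder g l (\<lambda>i. rh n s (h i)) (vadd (rh n s q) (vsc r (rh n s (h l))))) (bder g l (\<lambda>i. rh n s (h i)) (rh n s q)))"
      unfolding Q_def eq IH[OF U] IH[OF Suc.prems(1)] by (simp add: rh_vsub rh_vsc)
  qed (use d in auto)
  have "((\<lambda>r. vsc (1/r) (vsub (bder g l (\<lambda>i. rh n s (h i)) (vadd (rh n s q) (vsc r (rh n s (h l))))) (bder g l (\<lambda>i. rh n s (h i)) (rh n s q)))) \<longlongrightarrow> rh n s (bder g (Suc l) h q)) (at 0)"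
    using tendsto_cong[OF ev] rh_tendsto[OF T] by blast
  then show ?case
    by (simp only: bder.simps) (rule the_equality, assumption, rule fun_tendsto_unique[OF at_neq_bot], assumption+)
qed

lemma scale_bder:
  "q \<in> UU \<Longrightarrow> (\<And>i. i < l \<Longrightarrow> h i \<in> sbar n) \<Longrightarrow> (\<And>i. i < l \<Longrightarrow> c i \<noteq> 0) \<Longrightarrow>
    bder g l (\<lambda>i. vsc (c i) (h i)) q = vsc (\<Prod>i<l. c i) (bder g l h q)"
proof (induction l arbitrary: q)
  case 0 then show ?case by (simp add: vsc_def)
next
  case (Suc l)
  define P where "P = (\<Prod>i<l. c i)"
  have cl: "c l \<noteq> 0" using Suc by auto
  define Q where "Q = (\<lambda>r. vsc (1/r) (vsub (bder g l h (vadd q (vsc r (h l)))) (bder g l h q)))"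
  have T: "(Q \<longlongrightarrow> bder g (Suc l) h q) (at 0)" unfolding Q_def
    by (rule bder_tendsto[OF sm Suc.prems(1)]) (use Suc.prems in auto)
  have T2: "((\<lambda>r. vsc (P * c l) (Q (r * c l))) \<longlongrightarrow> vsc (P * c l) (bder g (Suc l) h q)) (at 0)"
    by (rule vsc_tendsto, rule filterlim_compose[OF T filterlim_mult_const_at0[OF cl]])
  obtain d where d: "d>0" "\<And>r. \<bar>r\<bar> < d \<Longrightarrow> vadd q (vsc r (h l)) \<in> UU"
    using line[OF Suc.prems(1), of "h l"] Suc.prems(2) by auto
  have IH: "\<And>q. q \<in> UU \<Longrightarrow> bder g l (\<lambda>i. vsc (c i) (h i)) q = vsc P (bder g l h q)"
    unfolding P_def using Suc by auto
  have ev: "eventually (\<lambda>r. vsc (P * c l) (Q (r * c l)) = vsc (1/r) (vsub (bder g l (\<lambda>i. vsc (c i) (h i)) (vadd q (vsc r (vsc (c l) (h l))))) (bder g l (\<lambda>i. vsc (c i) (h i)) q))) (at 0)"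
    unfolding eventually_at
  proof (intro exI[of _ "d / \<bar>c l\<bar>"] conjI ballI impI)
    fix r :: real assume r: "r \<noteq> 0 \<and> dist r 0 < d / \<bar>c l\<bar>"
    then have "\<bar>r * c l\<bar> < d" using cl by (auto simp: field_simps abs_mult)
    then have U: "vadd q (vsc (r * c l) (h l)) \<in> UU" using d by auto
    have e1: "vsc r (vsc (c l) (h l)) = vsc (r * c l) (h l)" by (simp add: vsc_def)
    show "vsc (P * c l) (Q (r * c l)) = vsc (1/r) (vsub (bder g l (\<lambda>i. vsc (c i) (h i)) (vadd q (vsc r (vsc (c l) (h l))))) (bder g l (\<lambda>i. vsc (c i) (h i)) q))"
      unfolding e1 IH[OF U] IH[OF Suc.prems(1)] Q_def using r cl
      by (auto simp: vsc_def vsub_def fun_eq_iff scaleR_diff_right field_simps)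
  qed (use d cl in auto)
  have "((\<lambda>r. vsc (1/r) (vsub (bder g l (\<lambda>i. vsc (c i) (h i)) (vadd q (vsc r (vsc (c l) (h l))))) (bder g l (\<lambda>i. vsc (c i) (h i)) q))) \<longlongrightarrow> vsc (\<Prod>i<Suc l. c i) (bder g (Suc l) h q)) (at 0)"
    using tendsto_cong[OF ev] T2 by (simp add: P_def mult.commute)
  then show ?case
    by (simp only: bder.simps) (rule the_equality, assumption, rule fun_tendsto_unique[OF at_neq_bot], assumption+)
qed

lemma dl_S: "set L \<subseteq> Ps \<Longrightarrow> dl L i \<in> sbar n \<or> i \<ge> length L"
  unfolding dl_def using e_S by auto

lemma D:
  assumes "inbox t" "K \<in> Ps" "set L \<subseteq> Ps"
  shows "((\<lambda>r. vsc (1/r) (vsub (B L (t(K := t K + r))) (B L t))) \<longlongrightarrow> B (L@[K]) t) (at 0)"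
proof -
  have "((\<lambda>r. vsc (1/r) (vsub (bder g (length L) (dl (L@[K])) (vadd (pt t) (vsc r (dl (L@[K]) (length L))))) (bder g (length L) (dl (L@[K])) (pt t))))
     \<longlongrightarrow> bder g (Suc (length L)) (dl (L@[K])) (pt t)) (at 0)"
    by (rule bder_tendsto[OF sm del(3)[OF assms(1)]]) (auto simp: dl_def e_S)
  moreover have "\<And>y. bder g (length L) (dl (L@[K])) y = bder g (length L) (dl L) y"
    by (rule bder_cong_dirs) (auto simp: dl_def nth_append)
  moreover have "dl (L@[K]) (length L) = e K" by (simp add: dl_def)
  ultimately show ?thesis unfolding B_def using pt_upd[OF assms(2)] by simp
qed

lemma hom:
  assumes s: "\<And>i. s i \<noteq> 0" and tU: "pt t \<in> UU" and M: "set M \<subseteq> Ps"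
  shows "vsc (\<Prod>j<length M. \<Prod>i\<in>M!j. s i) (B M (st s t)) = rh n s (B M t)"
proof -
  define cc where "cc = (\<lambda>j. if j < length M then (\<Prod>i\<in>M!j. s i) else 1)"
  have fin: "j < length M \<Longrightarrow> finite (M!j)" for j using M nth_mem[of j M] Ps_fin by blast
  have cc0: "cc j \<noteq> 0" for j using s fin by (auto simp: cc_def)
  have dlS: "\<And>i. i < length M \<Longrightarrow> dl M i \<in> sbar n" using dl_S[OF M] by force
  have rhdl: "(\<lambda>i. rh n s (dl M i)) = (\<lambda>i. vsc (cc i) (dl M i))"
  proof
    fix i show "rh n s (dl M i) = vsc (cc i) (dl M i)"
    proof (cases "i < length M")
      case True
      then have "M!i \<in> Ps" using M nth_mem[of i M] by blast
      then show ?thesis using rh_e[of "M!i" s] True by (simp add: dl_def cc_def)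
    qed (auto simp: dl_def cc_def rh_def vsc_def)
  qed
  have "rh n s (B M t) = bder g (length M) (\<lambda>i. rh n s (dl M i)) (rh n s (pt t))"
    unfolding B_def using nat_bder[OF tU dlS] by simp
  also have "\<dots> = bder g (length M) (\<lambda>i. vsc (cc i) (dl M i)) (pt (st s t))" unfolding rhdl rh_pt ..
  also have "\<dots> = vsc (\<Prod>i<length M. cc i) (B M (st s t))"
    unfolding B_def by (rule scale_bder) (use natU[OF tU, of s] rh_pt dlS cc0 in auto)
  also have "(\<Prod>i<length M. cc i) = (\<Prod>j<length M. \<Prod>i\<in>M!j. s i)" by (simp add: cc_def)
  finally show ?thesis by simp
qed

end



lemma prod_if_pow: "finite A \<Longrightarrow> (\<Prod>j\<in>A. if P j then (\<sigma>::real) else 1) = \<sigma> ^ card {j\<in>A. P j}"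
  by (simp add: prod.If_cases Collect_conj_eq Int_commute inf_left_commute)

context SF begin

definition sg :: "nat \<Rightarrow> real \<Rightarrow> nat \<Rightarrow> real" where "sg i0 \<sigma> = (\<lambda>i. if i = i0 then \<sigma> else 1)"

lemma prod_sg: "(\<Prod>i\<in>K. sg i0 \<sigma> i) = (if finite K \<and> i0 \<in> K then \<sigma> else 1)"
  by (cases "finite K") (auto simp: sg_def)

lemma dl_dirs: "set M \<subseteq> Ps \<Longrightarrow> dl M \<in> dirs (sbar n) (length M)"
  unfolding dirs_def dl_def using e_S by auto

lemma st_sg_inbox: "inbox t \<Longrightarrow> 0 \<le> \<sigma> \<Longrightarrow> \<sigma> \<le> 1 \<Longrightarrow> inbox (st (sg i0 \<sigma>) t)"
  unfolding inbox_def st_def prod_sg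
proof
  fix K assume a: "\<forall>K\<in>Ps. \<bar>t K\<bar> < del" "0 \<le> \<sigma>" "\<sigma> \<le> 1" "K \<in> Ps"
  have "\<bar>(if finite K \<and> i0 \<in> K then \<sigma> else 1) * t K\<bar> \<le> \<bar>t K\<bar>"
    using a by (auto simp: abs_mult intro: mult_left_le_one_le)
  then show "\<bar>(if finite K \<and> i0 \<in> K then \<sigma> else 1) * t K\<bar> < del" using a by auto
qed

lemma path_tendsto:
  "((\<lambda>\<sigma>. pt (st (sg i0 \<sigma>) t)) \<longlongrightarrow> pt (st (sg i0 0) t)) (at_right 0)"
  unfolding fun_tendsto_iff
proof
  fix c
  have "((\<lambda>\<sigma>. (if c = {} then 1 else (if finite c \<and> i0 \<in> c then \<sigma> else 1) * t c)) \<longlongrightarrow>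
           (if c = {} then 1 else (if finite c \<and> i0 \<in> c then 0 else 1) * t c)) (at_right 0)"
    by (cases "c = {}"; cases "finite c \<and> i0 \<in> c") (auto intro!: tendsto_eq_intros tendsto_ident_at)
  then have "((\<lambda>\<sigma>. (if c = {} then 1 else (if finite c \<and> i0 \<in> c then \<sigma> else 1) * t c) *\<^sub>R x c) \<longlongrightarrow>
           (if c = {} then 1 else (if finite c \<and> i0 \<in> c then 0 else 1) * t c) *\<^sub>R x c) (at_right 0)"
    by (intro plcs_scale[OF plcsE] tendsto_const)
  then show "((\<lambda>\<sigma>. pt (st (sg i0 \<sigma>) t) c) \<longlongrightarrow> pt (st (sg i0 0) t) c) (at_right 0)"
    by (simp add: pt_def st_def prod_sg)
qed

lemma B_tendsto_sg:
  assumes t: "inbox t" and M: "set M \<subseteq> Ps"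
  shows "((\<lambda>\<sigma>. B M (st (sg i0 \<sigma>) t)) \<longlongrightarrow> B M (st (sg i0 0) t)) (at_right 0)"
proof -
  have "((\<lambda>\<sigma>. bder g (length M) (snd (pt (st (sg i0 \<sigma>) t), dl M)) (fst (pt (st (sg i0 \<sigma>) t), dl M)))
         \<longlongrightarrow> bder g (length M) (snd (pt (st (sg i0 0) t), dl M)) (fst (pt (st (sg i0 0) t), dl M))) (at_right 0)"
  proof (rule continuous_on_tendsto_compose[OF bder_cont[OF sm]])
    show "((\<lambda>\<sigma>. (pt (st (sg i0 \<sigma>) t), dl M)) \<longlongrightarrow> (pt (st (sg i0 0) t), dl M)) (at_right 0)"
      by (intro tendsto_Pair path_tendsto tendsto_const)
    show "(pt (st (sg i0 0) t), dl M) \<in> UU \<times> dirs (sbar n) (length M)"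
      using del(3)[OF st_sg_inbox[OF t, of 0]] dl_dirs[OF M] by auto
    have "eventually (\<lambda>\<sigma>. \<sigma> \<in> {0<..<1}) (at_right (0::real))" by (rule eventually_at_right_real) simp
    moreover have "(pt (st (sg i0 \<sigma>) t), dl M) \<in> UU \<times> dirs (sbar n) (length M)" if "\<sigma> \<in> {0<..<1}" for \<sigma>
    proof -
      have "inbox (st (sg i0 \<sigma>) t)" by (rule st_sg_inbox[OF t]) (use that in auto)
      then show ?thesis using del(3) dl_dirs[OF M] by blast
    qed
    ultimately show "\<forall>\<^sub>F \<sigma> in at_right 0. (pt (st (sg i0 \<sigma>) t), dl M) \<in> UU \<times> dirs (sbar n) (length M)"
      by (rule eventually_mono)
  qed
  then show ?thesis by (simp add: B_def)
qed

lemma B_out: "inbox t \<Longrightarrow> set M \<subseteq> Ps \<Longrightarrow> \<not> J \<subseteq> {1..n} \<Longrightarrow> B M t J = 0"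
proof -
  assume t: "inbox t" and M: "set M \<subseteq> Ps" and J: "\<not> J \<subseteq> {1..n}"
  have "vsc (\<Prod>j<length M. \<Prod>i\<in>M!j. (\<lambda>_. 1) i) (B M (st (\<lambda>_. 1) t)) = rh n (\<lambda>_. 1) (B M t)"
    by (rule hom[OF _ del(3)[OF t] M]) simp
  moreover have st1: "st (\<lambda>_. 1) t = t" by (simp add: st_def)
  ultimately have "vsc 1 (B M t) J = rh n (\<lambda>_. 1) (B M t) J" by simp
  then show ?thesis using J unfolding vsc_def rh_def by simp
qed

lemma van:
  assumes t: "inbox t" and M: "set M \<subseteq> Ps" and cnt: "card {j. j < length M \<and> i0 \<in> M!j} \<ge> 2"
  shows "B M t J = 0"
proof (cases "J \<subseteq> {1..n}")
  case False then show ?thesis using B_out t M by blast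
next
  case J: True
  define m where "m = card {j. j < length M \<and> i0 \<in> M!j}"
  define b where "b = (if i0 \<in> J then 1 else 0::nat)"
  have mb: "b \<le> m" "m - b \<ge> 1" using cnt by (auto simp: m_def b_def)
  have finJ: "finite J" using J finite_subset by blast
  have finM: "\<And>j. j < length M \<Longrightarrow> finite (M!j)" using M nth_mem Ps_fin by blast
  have eq: "B M t J = \<sigma> ^ (m - b) *\<^sub>R B M (st (sg i0 \<sigma>) t) J" if \<sigma>: "0 < \<sigma>" for \<sigma>
  proof -
    have "vsc (\<Prod>j<length M. \<Prod>i\<in>M!j. sg i0 \<sigma> i) (B M (st (sg i0 \<sigma>) t)) = rh n (sg i0 \<sigma>) (B M t)"
      by (rule hom[OF _ del(3)[OF t] M]) (use \<sigma> in \<open>auto simp: sg_def\<close>)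
    moreover have "(\<Prod>j<length M. \<Prod>i\<in>M!j. sg i0 \<sigma> i) = (\<Prod>j<length M. if i0 \<in> M!j then \<sigma> else 1)"
      by (rule prod.cong) (auto simp: prod_sg finM)
    moreover have "\<dots> = \<sigma> ^ m" unfolding m_def by (subst prod_if_pow) (auto simp: lessThan_def)
    moreover have "(\<Prod>i\<in>J. sg i0 \<sigma> i) = \<sigma> ^ b" using finJ by (simp add: prod_sg b_def)
    ultimately have "\<sigma> ^ m *\<^sub>R B M (st (sg i0 \<sigma>) t) J = \<sigma> ^ b *\<^sub>R B M t J"
      using J by (metis (no_types, lifting) rh_def vsc_def)
    moreover have "\<sigma> ^ m = \<sigma> ^ b * \<sigma> ^ (m - b)" using mb by (simp add: power_add[symmetric])
    ultimately have "\<sigma> ^ b *\<^sub>R (\<sigma> ^ (m - b) *\<^sub>R B M (st (sg i0 \<sigma>) t) J) = \<sigma> ^ b *\<^sub>R B M t J"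
      by (simp only: scaleR_scaleR)
    then show ?thesis using \<sigma> by (simp only: scaleR_cancel_left) simp
  qed
  have lim: "((\<lambda>\<sigma>. \<sigma> ^ (m - b) *\<^sub>R B M (st (sg i0 \<sigma>) t) J) \<longlongrightarrow> 0 ^ (m - b) *\<^sub>R B M (st (sg i0 0) t) J) (at_right 0)"
  proof (rule plcs_scale[OF plcsF])
    show "((\<lambda>\<sigma>::real. \<sigma> ^ (m - b)) \<longlongrightarrow> 0 ^ (m - b)) (at_right 0)"
      by (intro tendsto_intros)
    show "((\<lambda>\<sigma>. B M (st (sg i0 \<sigma>) t) J) \<longlongrightarrow> B M (st (sg i0 0) t) J) (at_right 0)"
      using B_tendsto_sg[OF t M, of i0] by (simp add: fun_tendsto_iff)
  qed
  have "eventually (\<lambda>\<sigma>. B M t J = \<sigma> ^ (m - b) *\<^sub>R B M (st (sg i0 \<sigma>) t) J) (at_right (0::real))"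
    using eventually_at_right_less[of "0::real"] by (rule eventually_mono) (rule eq)
  then have "((\<lambda>\<sigma>::real. B M t J) \<longlongrightarrow> 0 ^ (m - b) *\<^sub>R B M (st (sg i0 0) t) J) (at_right 0)"
    using lim by (simp add: tendsto_cong)
  then have "B M t J = 0 ^ (m - b) *\<^sub>R B M (st (sg i0 0) t) J"
    using tendsto_unique[OF trivial_limit_at_right_real tendsto_const] by blast
  moreover have "(0::real) ^ (m - b) = 0" using mb by simp
  ultimately show ?thesis by simp
qed

end



lemma deriv_const_affine_pair:
  fixes \<phi> :: "real \<Rightarrow> 'a::{real_vector,t2_space} \<times> 'b::{real_vector,t2_space}"
  assumes la: "lcs TYPE('a)" and lb: "lcs TYPE('b)" and ab: "a \<le> b"
    and der: "\<And>r. r\<in>{a..b} \<Longrightarrow> ((\<lambda>h. (1/h) *\<^sub>R (\<phi>(r+h) - \<phi> r)) \<longlongrightarrow> c) (at 0)"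
  shows "\<phi> b = \<phi> a + (b-a) *\<^sub>R c"
proof -
  have "fst (\<phi> b) = fst (\<phi> a) + (b-a) *\<^sub>R fst c"
  proof (rule deriv_const_affine[OF la ab])
    fix r assume "r \<in> {a..b}"
    from tendsto_fst[OF der[OF this]] show "((\<lambda>h. (1/h) *\<^sub>R (fst (\<phi>(r+h)) - fst (\<phi> r))) \<longlongrightarrow> fst c) (at 0)"
      by simp
  qed
  moreover have "snd (\<phi> b) = snd (\<phi> a) + (b-a) *\<^sub>R snd c"
  proof (rule deriv_const_affine[OF lb ab])
    fix r assume "r \<in> {a..b}"
    from tendsto_snd[OF der[OF this]] show "((\<lambda>h. (1/h) *\<^sub>R (snd (\<phi>(r+h)) - snd (\<phi> r))) \<longlongrightarrow> snd c) (at 0)"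
      by simp
  qed
  ultimately show ?thesis by (simp add: prod_eq_iff)
qed

context SF begin

lemma inbox_upd: "inbox t \<Longrightarrow> \<bar>u\<bar> < del \<Longrightarrow> inbox (t(K := u))"
  unfolding inbox_def by auto

lemma DJ:
  assumes "inbox t" "K \<in> Ps" "set L \<subseteq> Ps"
  shows "((\<lambda>h. (1/h) *\<^sub>R (B L (t(K := t K + h)) J - B L t J)) \<longlongrightarrow> B (L@[K]) t J) (at 0)"
  using D[OF assms] unfolding fun_tendsto_iff vsc_def vsub_def by simp

lemma cnt2:
  assumes "K \<in> Ps" shows "\<exists>i0. card {j. j < length (L@[K,K]) \<and> i0 \<in> (L@[K,K])!j} \<ge> 2"
proof -
  obtain i0 where "i0 \<in> K" using assms by (auto simp: Ps_def)
  then have "{length L, Suc (length L)} \<subseteq> {j. j < length (L@[K,K]) \<and> i0 \<in> (L@[K,K])!j}"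
    by (auto simp: nth_append)
  from card_mono[OF _ this] have "card {length L, Suc (length L)} \<le> card {j. j < length (L@[K,K]) \<and> i0 \<in> (L@[K,K])!j}"
    by auto
  then show ?thesis by (intro exI[of _ i0]) (simp add: eval_nat_numeral)
qed

lemma aff:
  assumes lF0: "lcs TYPE('f0)" and lF1: "lcs TYPE('f1)"
    and t: "inbox t" and K: "K \<in> Ps" and L: "set L \<subseteq> Ps" and r: "\<bar>t K + r\<bar> < del"
  shows "B L (t(K := t K + r)) J = B L t J + r *\<^sub>R B (L@[K]) t J"
proof -
  have tK: "\<bar>t K\<bar> < del" using t K by (auto simp: inbox_def)
  define \<Phi> where "\<Phi> = (\<lambda>u. B (L@[K]) (t(K := u)) J)"
  define \<Psi> where "\<Psi> = (\<lambda>u. B L (t(K := u)) J)"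
  have L2: "set (L@[K]) \<subseteq> Ps" using L K by auto
  have dPhi: "((\<lambda>h. (1/h) *\<^sub>R (\<Phi>(u+h) - \<Phi> u)) \<longlongrightarrow> 0) (at 0)" if u: "\<bar>u\<bar> < del" for u
  proof -
    have "((\<lambda>h. (1/h) *\<^sub>R (B (L@[K]) ((t(K:=u))(K := (t(K:=u)) K + h)) J - B (L@[K]) (t(K:=u)) J)) \<longlongrightarrow> B ((L@[K])@[K]) (t(K:=u)) J) (at 0)"
      by (rule DJ[OF inbox_upd[OF t u] K L2])
    moreover obtain i0 where "card {j. j < length (L@[K,K]) \<and> i0 \<in> (L@[K,K])!j} \<ge> 2" using cnt2[OF K] by blast
    then have "B ((L@[K])@[K]) (t(K:=u)) J = 0" using van[OF inbox_upd[OF t u]] L2 by simp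
    ultimately show ?thesis by (simp add: \<Phi>_def)
  qed
  have Phic: "\<Phi> u2 = \<Phi> u1" if "\<bar>u1\<bar> < del" "\<bar>u2\<bar> < del" "u1 \<le> u2" for u1 u2
  proof -
    have "\<Phi> u2 = \<Phi> u1 + (u2-u1) *\<^sub>R 0"
      by (rule deriv_const_affine_pair[OF lF0 lF1 that(3)]) (rule dPhi, use that in auto)
    then show ?thesis by simp
  qed
  have Phic': "\<Phi> u = B (L@[K]) t J" if "\<bar>u\<bar> < del" for u
  proof -
    have "\<Phi> u = \<Phi> (t K)" using Phic[of u "t K"] Phic[of "t K" u] that tK by (cases "u \<le> t K") auto
    then show ?thesis by (simp add: \<Phi>_def)
  qed
  have dPsi: "((\<lambda>h. (1/h) *\<^sub>R (\<Psi>(u+h) - \<Psi> u)) \<longlongrightarrow> B (L@[K]) t J) (at 0)" if u: "\<bar>u\<bar> < del" for u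
  proof -
    have "((\<lambda>h. (1/h) *\<^sub>R (B L ((t(K:=u))(K := (t(K:=u)) K + h)) J - B L (t(K:=u)) J)) \<longlongrightarrow> B (L@[K]) (t(K:=u)) J) (at 0)"
      by (rule DJ[OF inbox_upd[OF t u] K L])
    then show ?thesis using Phic'[OF u] by (simp add: \<Psi>_def \<Phi>_def)
  qed
  show ?thesis
  proof (cases "0 \<le> r")
    case True
    have "\<Psi> (t K + r) = \<Psi> (t K) + ((t K + r) - t K) *\<^sub>R B (L@[K]) t J"
      by (rule deriv_const_affine_pair[OF lF0 lF1]) (use True in simp, rule dPsi, use tK r in auto)
    then show ?thesis by (simp add: \<Psi>_def)
  next
    case False
    have "\<Psi> (t K) = \<Psi> (t K + r) + (t K - (t K + r)) *\<^sub>R B (L@[K]) t J"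
      by (rule deriv_const_affine_pair[OF lF0 lF1]) (use False in simp, rule dPsi, use tK r in auto)
    then show ?thesis by (simp add: \<Psi>_def algebra_simps)
  qed
qed

lemma sym2:
  assumes lF0: "lcs TYPE('f0)" and lF1: "lcs TYPE('f1)"
    and t: "inbox t" and K: "K \<in> Ps" and K': "K' \<in> Ps" and L: "set L \<subseteq> Ps"
  shows "B (L@[K,K']) t J = B (L@[K',K]) t J"
proof (cases "K = K'")
  case True then show ?thesis by simp
next
  case ne: False
  have tK: "\<bar>t K\<bar> < del" "\<bar>t K'\<bar> < del" using t K K' by (auto simp: inbox_def)
  define d where "d = (del - max \<bar>t K\<bar> \<bar>t K'\<bar>) / 2"
  have d0: "d > 0" using tK by (auto simp: d_def)
  have "\<bar>t K + d\<bar> \<le> \<bar>t K\<bar> + d" "\<bar>t K' + d\<bar> \<le> \<bar>t K'\<bar> + d" using d0 abs_triangle_ineq[of "t K" d] abs_triangle_ineq[of "t K'" d] by auto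
  moreover have "\<bar>t K\<bar> \<le> max \<bar>t K\<bar> \<bar>t K'\<bar>" "\<bar>t K'\<bar> \<le> max \<bar>t K\<bar> \<bar>t K'\<bar>" "max \<bar>t K\<bar> \<bar>t K'\<bar> < del" using tK by auto
  moreover have "2*d = del - max \<bar>t K\<bar> \<bar>t K'\<bar>" by (simp add: d_def)
  ultimately have d: "d > 0" "\<bar>t K + d\<bar> < del" "\<bar>t K' + d\<bar> < del" using d0 by linarith+
  define t1 where "t1 = t(K' := t K' + d)"
  define t2 where "t2 = t(K := t K + d)"
  have t1: "inbox t1" unfolding t1_def by (rule inbox_upd[OF t d(3)])
  have t2: "inbox t2" unfolding t2_def by (rule inbox_upd[OF t d(2)])
  have e12: "t1(K := t1 K + d) = t2(K' := t2 K' + d)" using ne by (auto simp: t1_def t2_def fun_eq_iff)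
  have LK: "set (L@[K]) \<subseteq> Ps" "set (L@[K']) \<subseteq> Ps" using L K K' by auto
  have a1: "B L (t1(K := t1 K + d)) J = B L t1 J + d *\<^sub>R B (L@[K]) t1 J"
    by (rule aff[OF lF0 lF1 t1 K L]) (use d ne in \<open>simp add: t1_def\<close>)
  have a2: "B L t1 J = B L t J + d *\<^sub>R B (L@[K']) t J"
    unfolding t1_def by (rule aff[OF lF0 lF1 t K' L d(3)])
  have a3: "B (L@[K]) t1 J = B (L@[K]) t J + d *\<^sub>R B (L@[K,K']) t J"
    unfolding t1_def using aff[OF lF0 lF1 t K' LK(1) d(3)] by simp
  have b1: "B L (t2(K' := t2 K' + d)) J = B L t2 J + d *\<^sub>R B (L@[K']) t2 J"
    by (rule aff[OF lF0 lF1 t2 K' L]) (use d ne in \<open>simp add: t2_def\<close>)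
  have b2: "B L t2 J = B L t J + d *\<^sub>R B (L@[K]) t J"
    unfolding t2_def by (rule aff[OF lF0 lF1 t K L d(2)])
  have b3: "B (L@[K']) t2 J = B (L@[K']) t J + d *\<^sub>R B (L@[K',K]) t J"
    unfolding t2_def using aff[OF lF0 lF1 t K LK(2) d(2)] by simp
  have "d *\<^sub>R (d *\<^sub>R B (L@[K,K']) t J) = d *\<^sub>R (d *\<^sub>R B (L@[K',K]) t J)"
    using a1 a2 a3 b1 b2 b3 e12 by (simp add: algebra_simps) metis
  then have "B (L@[K,K']) t J = B (L@[K',K]) t J \<or> d = 0" by simp
  then show ?thesis using d(1) by auto
qed

lemma prop_eq:
  assumes "\<And>t. inbox t \<Longrightarrow> B L1 t = B L2 t" "set L1 \<subseteq> Ps" "set L2 \<subseteq> Ps"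
    and "set M \<subseteq> Ps" "inbox t"
  shows "B (L1@M) t = B (L2@M) t"
  using assms(4,5)
proof (induction M arbitrary: t rule: rev_induct)
  case Nil then show ?case using assms(1) by simp
next
  case (snoc K M)
  have K: "K \<in> Ps" and M: "set M \<subseteq> Ps" using snoc.prems by auto
  have tK: "\<bar>t K\<bar> < del" using snoc.prems K by (auto simp: inbox_def)
  have ev: "eventually (\<lambda>r. vsc (1/r) (vsub (B (L1@M) (t(K := t K + r))) (B (L1@M) t)) =
                           vsc (1/r) (vsub (B (L2@M) (t(K := t K + r))) (B (L2@M) t))) (at 0)"
    unfolding eventually_at
  proof (intro exI[of _ "del - \<bar>t K\<bar>"] conjI ballI impI)
    fix r :: real assume "r \<noteq> 0 \<and> dist r 0 < del - \<bar>t K\<bar>"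
    then have "inbox (t(K := t K + r))" by (intro inbox_upd[OF snoc.prems(2)]) auto
    then have e1: "B (L1@M) (t(K := t K + r)) = B (L2@M) (t(K := t K + r))" using snoc.IH[OF M] by blast
    show "vsc (1/r) (vsub (B (L1@M) (t(K := t K + r))) (B (L1@M) t)) =
                           vsc (1/r) (vsub (B (L2@M) (t(K := t K + r))) (B (L2@M) t))"
      by (simp only: e1 snoc.IH[OF M snoc.prems(2)])
  qed (use tK in auto)
  have s1: "set (L1@M) \<subseteq> Ps" "set (L2@M) \<subseteq> Ps" using assms(2,3) M by auto
  have T1: "((\<lambda>r. vsc (1/r) (vsub (B (L2@M) (t(K := t K + r))) (B (L2@M) t))) \<longlongrightarrow> B ((L1@M)@[K]) t) (at 0)"
    using tendsto_cong[OF ev] D[OF snoc.prems(2) K s1(1)] by blast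
  have T2: "((\<lambda>r. vsc (1/r) (vsub (B (L2@M) (t(K := t K + r))) (B (L2@M) t))) \<longlongrightarrow> B ((L2@M)@[K]) t) (at 0)"
    using D[OF snoc.prems(2) K s1(2)] .
  show ?case using fun_tendsto_unique[OF at_neq_bot T1 T2] by simp
qed

lemma swap_eq:
  assumes lF0: "lcs TYPE('f0)" and lF1: "lcs TYPE('f1)"
    and t: "inbox t" and s: "set (A@[K,K']@C) \<subseteq> Ps"
  shows "B (A@[K,K']@C) t = B (A@[K',K]@C) t"
proof -
  have "B ((A@[K,K'])@C) t = B ((A@[K',K])@C) t"
  proof (rule prop_eq)
    show "\<And>t. inbox t \<Longrightarrow> B (A@[K,K']) t = B (A@[K',K]) t"
      using sym2[OF lF0 lF1] s by (intro ext) auto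
  qed (use s t in auto)
  then show ?thesis by simp
qed

lemma move_end:
  assumes lF0: "lcs TYPE('f0)" and lF1: "lcs TYPE('f1)"
    and t: "inbox t" and s: "set (A@[K]@C) \<subseteq> Ps"
  shows "B (A@[K]@C) t = B (A@C@[K]) t"
  using s
proof (induction C arbitrary: A)
  case Nil then show ?case by simp
next
  case (Cons c C)
  have "B (A@[K]@c#C) t = B (A@[K,c]@C) t" by simp
  also have "\<dots> = B (A@[c,K]@C) t" by (rule swap_eq[OF lF0 lF1 t]) (use Cons.prems in auto)
  also have "\<dots> = B ((A@[c])@[K]@C) t" by simp
  also have "\<dots> = B ((A@[c])@C@[K]) t" by (rule Cons.IH) (use Cons.prems in auto)
  finally show ?case by simp
qed

lemma perm_eq:
  assumes lF0: "lcs TYPE('f0)" and lF1: "lcs TYPE('f1)"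
  shows "mset L1 = mset L2 \<Longrightarrow> set L1 \<subseteq> Ps \<Longrightarrow> inbox t \<Longrightarrow> B L1 t = B L2 t"
proof (induction L2 arbitrary: L1 t rule: rev_induct)
  case Nil then show ?case by simp
next
  case (snoc K L2)
  have "K \<in># mset L1" using snoc.prems(1) by simp
  then have "K \<in> set L1" by simp
  then obtain A C where L1: "L1 = A@K#C" by (meson split_list)
  have "B L1 t = B (A@C@[K]) t" unfolding L1 using move_end[OF lF0 lF1 snoc.prems(3), of A K C] snoc.prems(2) L1 by simp
  also have "\<dots> = B ((A@C)@[K]) t" by simp
  also have "\<dots> = B (L2@[K]) t"
  proof (rule prop_eq)
    have m: "mset (A@C) = mset L2" using snoc.prems(1) L1 by (simp add: add.commute)
    show "\<And>t. inbox t \<Longrightarrow> B (A@C) t = B L2 t"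
      by (rule snoc.IH[OF m]) (use snoc.prems L1 in auto)
    have "set L2 \<subseteq> set L1" using snoc.prems(1) by (metis mset_eq_setD set_append Un_upper1)
    then show "set L2 \<subseteq> Ps" using snoc.prems(2) by blast
  qed (use snoc.prems L1 in auto)
  finally show ?case .
qed

end



context SF begin

lemma tay:
  assumes lF0: "lcs TYPE('f0)" and lF1: "lcs TYPE('f1)"
  shows "distinct Ks \<Longrightarrow> set Ks \<subseteq> Ps \<Longrightarrow> set L \<subseteq> Ps \<Longrightarrow> inbox t \<Longrightarrow> (\<And>K. K \<in> Ps - set Ks \<Longrightarrow> t K = 0) \<Longrightarrow>
    B L t J = (\<Sum>S\<in>Pow (set Ks). (\<Prod>K\<in>S. t K) *\<^sub>R B (L @ filter (\<lambda>K. K \<in> S) Ks) (\<lambda>_. 0) J)"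
proof (induction Ks arbitrary: L t)
  case Nil
  have "pt t = pt (\<lambda>_. 0)" by (rule pt_cong) (use Nil in auto)
  then show ?case by (simp add: B_def)
next
  case (Cons K Ks)
  have K: "K \<in> Ps" "K \<notin> set Ks" and Ks: "distinct Ks" "set Ks \<subseteq> Ps" using Cons.prems by auto
  define t0 where "t0 = t(K := 0)"
  have t0: "inbox t0" unfolding t0_def by (rule inbox_upd[OF Cons.prems(4)]) (use del in auto)
  have tK: "\<bar>t K\<bar> < del" using Cons.prems(4) K by (auto simp: inbox_def)
  have tt0: "t = t0(K := t0 K + t K)" by (auto simp: t0_def)
  have z0: "\<And>K'. K' \<in> Ps - set Ks \<Longrightarrow> t0 K' = 0" using Cons.prems(5) by (auto simp: t0_def)
  have LK: "set (L@[K]) \<subseteq> Ps" using Cons.prems(3) K by auto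
  have "B L t J = B L t0 J + t K *\<^sub>R B (L@[K]) t0 J"
    by (subst tt0, rule aff[OF lF0 lF1 t0 K(1) Cons.prems(3)]) (use tK in \<open>simp add: t0_def\<close>)
  also have "B L t0 J = (\<Sum>S\<in>Pow (set Ks). (\<Prod>K\<in>S. t0 K) *\<^sub>R B (L @ filter (\<lambda>K. K \<in> S) Ks) (\<lambda>_. 0) J)"
    by (rule Cons.IH[OF Ks Cons.prems(3) t0 z0])
  also have "B (L@[K]) t0 J = (\<Sum>S\<in>Pow (set Ks). (\<Prod>K\<in>S. t0 K) *\<^sub>R B ((L@[K]) @ filter (\<lambda>K. K \<in> S) Ks) (\<lambda>_. 0) J)"
    by (rule Cons.IH[OF Ks LK t0 z0])
  finally have eq: "B L t J = (\<Sum>S\<in>Pow (set Ks). (\<Prod>K\<in>S. t0 K) *\<^sub>R B (L @ filter (\<lambda>K. K \<in> S) Ks) (\<lambda>_. 0) J) +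
      (\<Sum>S\<in>Pow (set Ks). (t K * (\<Prod>K\<in>S. t0 K)) *\<^sub>R B ((L@[K]) @ filter (\<lambda>K. K \<in> S) Ks) (\<lambda>_. 0) J)"
    by (simp add: scaleR_sum_right)
  define F where "F = (\<lambda>S. (\<Prod>K\<in>S. t K) *\<^sub>R B (L @ filter (\<lambda>K. K \<in> S) (K#Ks)) (\<lambda>_. 0) J)"
  have P1: "F S = (\<Prod>K\<in>S. t0 K) *\<^sub>R B (L @ filter (\<lambda>K. K \<in> S) Ks) (\<lambda>_. 0) J" if "S \<in> Pow (set Ks)" for S
  proof -
    have "K \<notin> S" using that K by auto
    then have "(\<Prod>K\<in>S. t K) = (\<Prod>K\<in>S. t0 K)" by (intro prod.cong) (auto simp: t0_def)
    then show ?thesis using \<open>K \<notin> S\<close> by (simp add: F_def)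
  qed
  have P2: "F (insert K S) = (t K * (\<Prod>K\<in>S. t0 K)) *\<^sub>R B ((L@[K]) @ filter (\<lambda>K. K \<in> S) Ks) (\<lambda>_. 0) J" if S: "S \<in> Pow (set Ks)" for S
  proof -
    have nS: "K \<notin> S" and fS: "finite S" using that K finite_subset by auto
    then have "(\<Prod>K\<in>S. t K) = (\<Prod>K\<in>S. t0 K)" by (intro prod.cong) (auto simp: t0_def)
    moreover have "(\<Prod>K\<in>insert K S. t K) = t K * (\<Prod>K\<in>S. t K)" using nS fS by simp
    moreover have "filter (\<lambda>K'. K' \<in> insert K S) Ks = filter (\<lambda>K. K \<in> S) Ks"
      using K(2) by (intro filter_cong) auto
    ultimately show ?thesis by (simp add: F_def)
  qed
  have "(\<Sum>S\<in>Pow (set (K#Ks)). F S) = (\<Sum>S\<in>Pow (set Ks). F S) + (\<Sum>S\<in>insert K ` Pow (set Ks). F S)"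
    by (simp add: Pow_insert, rule sum.union_disjoint) (use K in auto)
  also have "(\<Sum>S\<in>insert K ` Pow (set Ks). F S) = (\<Sum>S\<in>Pow (set Ks). F (insert K S))"
    by (rule sum.reindex_cong[of "insert K"]) (use K in \<open>auto simp: inj_on_def\<close>)
  finally have "(\<Sum>S\<in>Pow (set (K#Ks)). F S) = B L t J"
    unfolding eq using P1 P2 by simp
  then show ?case by (simp add: F_def)
qed

lemma V0:
  assumes M: "set M \<subseteq> Ps" "distinct M" and nz: "B M (\<lambda>_. 0) J \<noteq> 0"
  shows "J \<subseteq> {1..n} \<and> partition_on J (set M)"
proof -
  have t: "inbox (\<lambda>_. 0)" using del by (simp add: inbox_def)
  have J: "J \<subseteq> {1..n}" using B_out[OF t M(1)] nz by blast
  have finM: "\<And>j. j < length M \<Longrightarrow> finite (M!j)" using M nth_mem Ps_fin by blast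
  have finJ: "finite J" using J finite_subset by blast
  have cnt: "card {j. j < length M \<and> i0 \<in> M!j} = (if i0 \<in> J then 1 else 0)" for i0
  proof -
    define m where "m = card {j. j < length M \<and> i0 \<in> M!j}"
    have h1: "vsc (\<Prod>j<length M. \<Prod>i\<in>M!j. sg i0 2 i) (B M (st (sg i0 2) (\<lambda>_. 0))) = rh n (sg i0 2) (B M (\<lambda>_. 0))"
      by (rule hom[OF _ del(3)[OF t] M(1)]) (auto simp: sg_def)
    have h2: "st (sg i0 2) (\<lambda>_. 0) = (\<lambda>_. 0)" by (simp add: st_def)
    have h3: "(\<Prod>j<length M. \<Prod>i\<in>M!j. sg i0 2 i) = (\<Prod>j<length M. if i0 \<in> M!j then 2 else 1)"
      by (rule prod.cong) (auto simp: prod_sg finM)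
    have h4: "(\<Prod>j<length M. if i0 \<in> M!j then 2 else 1) = (2::real) ^ m" unfolding m_def by (subst prod_if_pow) (auto simp: lessThan_def)
    have h5: "(\<Prod>i\<in>J. sg i0 2 i) = (if i0 \<in> J then 2 else 1)" using finJ by (simp add: prod_sg)
    have "vsc (\<Prod>j<length M. \<Prod>i\<in>M!j. sg i0 2 i) (B M (st (sg i0 2) (\<lambda>_. 0))) J = rh n (sg i0 2) (B M (\<lambda>_. 0)) J"
      using h1 by simp
    then have "(2::real) ^ m *\<^sub>R B M (\<lambda>_. 0) J = (if i0 \<in> J then 2 else 1) *\<^sub>R B M (\<lambda>_. 0) J"
      unfolding vsc_def rh_def h2 h3 h4 h5 using J by simp
    then have "(2::real) ^ m = (if i0 \<in> J then 2 else 1)" using nz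
      by (metis scaleR_cancel_right)
    then have "(2::real) ^ m = 2 ^ (if i0 \<in> J then 1 else 0)" by simp
    then have "m = (if i0 \<in> J then 1 else 0)" using power_inject_exp[of "2::real"] by simp
    then show ?thesis by (simp add: m_def)
  qed
  have un: "\<Union>(set M) = J"
  proof
    show "\<Union>(set M) \<subseteq> J"
    proof
      fix i assume "i \<in> \<Union>(set M)"
      then obtain j where j: "j < length M" "i \<in> M!j" by (auto simp: in_set_conv_nth)
      then have "{j. j < length M \<and> i \<in> M!j} \<noteq> {}" by auto
      then have "card {j. j < length M \<and> i \<in> M!j} \<noteq> 0" by simp
      then show "i \<in> J" using cnt[of i] by (auto split: if_splits)
    qed
    show "J \<subseteq> \<Union>(set M)"
    proof
      fix i assume "i \<in> J"
      then have "card {j. j < length M \<and> i \<in> M!j} = 1" using cnt[of i] by simp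
      then obtain j where "j < length M" "i \<in> M!j" by (metis (no_types, lifting) card_1_singletonE mem_Collect_eq singletonI)
      then show "i \<in> \<Union>(set M)" by auto
    qed
  qed
  have dj: "disjoint (set M)"
  proof (rule pairwiseI)
    fix p q assume pq: "p \<in> set M" "q \<in> set M" "p \<noteq> q"
    show "disjnt p q"
    proof (rule ccontr)
      assume "\<not> disjnt p q"
      then obtain i where i: "i \<in> p" "i \<in> q" by (auto simp: disjnt_def)
      obtain a b where ab: "a < length M" "b < length M" "M!a = p" "M!b = q" using pq by (auto simp: in_set_conv_nth)
      then have "a \<noteq> b" using pq by auto
      then have "{a, b} \<subseteq> {j. j < length M \<and> i \<in> M!j}" using ab i by auto
      then have "card {a, b} \<le> card {j. j < length M \<and> i \<in> M!j}" by (intro card_mono) auto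
      then have "2 \<le> card {j. j < length M \<and> i \<in> M!j}" using \<open>a \<noteq> b\<close> by simp
      then show False using cnt[of i] by (auto split: if_splits)
    qed
  qed
  have "{} \<notin> set M" using M by (auto simp: Ps_def)
  then show ?thesis using J un dj by (simp add: partition_on_def)
qed

end



context SF begin

definition "FS Ks S = filter (\<lambda>K. K \<in> S) Ks"

lemma part_Ps: "partition_on I \<omega> \<Longrightarrow> I \<subseteq> {1..n} \<Longrightarrow> \<omega> \<subseteq> Ps"
  unfolding partition_on_def Ps_def by auto

lemma part_fin: "partition_on I \<omega> \<Longrightarrow> I \<subseteq> {1..n} \<Longrightarrow> finite \<omega>"
  by (rule finite_subset[OF part_Ps finite_Ps])

lemma Z:
  assumes "set M \<subseteq> Ps" "distinct M" "\<not> (J \<subseteq> {1..n} \<and> partition_on J (set M))"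
  shows "B M (\<lambda>_. 0) J = 0"
  using V0[OF assms(1,2)] assms(3) by blast

lemma BD:
  assumes lF0: "lcs TYPE('f0)" and lF1: "lcs TYPE('f1)"
    and Ks: "distinct Ks" "set Ks = Ps" and p: "partition_on I \<omega>" and I: "I \<subseteq> {1..n}"
  shows "bder g (card \<omega>) (blockdirs x \<omega>) (comp0 x) = B (FS Ks \<omega>) (\<lambda>_. 0)"
proof -
  have \<omega>: "\<omega> \<subseteq> Ps" "finite \<omega>" using part_Ps[OF p I] part_fin[OF p I] by auto
  define bs where "bs = (SOME bs. distinct bs \<and> set bs = \<omega>)"
  have bs: "distinct bs" "set bs = \<omega>" unfolding bs_def
    using someI_ex[of "\<lambda>bs. distinct bs \<and> set bs = \<omega>"] finite_distinct_list[OF \<omega>(2)] by auto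
  have "blockdirs x \<omega> = dl bs" unfolding blockdirs_def bs_def[symmetric] Let_def dl_def e_def ..
  moreover have "card \<omega> = length bs" using bs distinct_card by blast
  ultimately have "bder g (card \<omega>) (blockdirs x \<omega>) (comp0 x) = B bs (\<lambda>_. 0)" by (simp add: B_def comp0_pt)
  also have "\<dots> = B (FS Ks \<omega>) (\<lambda>_. 0)"
  proof (rule perm_eq[OF lF0 lF1])
    have "set (FS Ks \<omega>) = \<omega>" "distinct (FS Ks \<omega>)" using Ks \<omega> by (auto simp: FS_def)
    then show "mset bs = mset (FS Ks \<omega>)" using bs set_eq_iff_mset_eq_distinct by metis
    show "set bs \<subseteq> Ps" using bs \<omega> by auto
    show "inbox (\<lambda>_. 0)" using del by (simp add: inbox_def)
  qed
  finally show ?thesis .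
qed

lemma final:
  assumes lF0: "lcs TYPE('f0)" and lF1: "lcs TYPE('f1)"
  shows "g x = (\<lambda>J. g (comp0 x) J +
           (\<Sum>I\<in>Ps. \<Sum>\<omega>\<in>{\<omega>. partition_on I \<omega>}.
               bder g (card \<omega>) (blockdirs x \<omega>) (comp0 x) J))"
proof
  fix J
  obtain Ks where Ks: "distinct Ks" "set Ks = Ps" using finite_distinct_list[OF finite_Ps] by blast
  have t0: "inbox (\<lambda>_. 0)" using del by (simp add: inbox_def)
  have FSs: "set (FS Ks S) = S" "distinct (FS Ks S)" if "S \<subseteq> Ps" for S using Ks that by (auto simp: FS_def)
  have BD': "bder g (card \<omega>) (blockdirs x \<omega>) (comp0 x) J = B (FS Ks \<omega>) (\<lambda>_. 0) J"
    if "partition_on I \<omega>" "I \<in> Ps" for I \<omega> using BD[OF lF0 lF1 Ks that(1)] that(2) by (simp add: Ps_def)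
  have g0: "g (comp0 x) J = B [] (\<lambda>_. 0) J" by (simp add: B_def comp0_pt)
  show "g x J = g (comp0 x) J + (\<Sum>I\<in>Ps. \<Sum>\<omega>\<in>{\<omega>. partition_on I \<omega>}. bder g (card \<omega>) (blockdirs x \<omega>) (comp0 x) J)"
  proof (cases "J \<subseteq> {1..n}")
    case False
    have "rh n (\<lambda>_. 1) x = x" by (auto simp: rh_def x_out)
    then have "g x = rh n (\<lambda>_. 1) (g x)" using natg[OF xU, of "\<lambda>_. 1"] by simp
    then have "g x J = 0" using False by (metis rh_def)
    moreover have "g (comp0 x) J = 0" using B_out[OF t0 _ False, of "[]"] g0 by simp
    moreover have "bder g (card \<omega>) (blockdirs x \<omega>) (comp0 x) J = 0" if "I \<in> Ps" "partition_on I \<omega>" for I \<omega>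
      using BD'[OF that(2,1)] B_out[OF t0 _ False] FSs part_Ps[OF that(2)] that(1) by (auto simp: Ps_def)
    ultimately show ?thesis by simp
  next
    case J: True
    define \<epsilon> where "\<epsilon> = del / 2"
    have \<epsilon>: "0 < \<epsilon>" "\<epsilon> < del" "\<epsilon> < 1" using del by (auto simp: \<epsilon>_def)
    define te where "te = (\<lambda>K::nat set. \<epsilon> ^ card K)"
    have te: "inbox te" unfolding inbox_def
    proof
      fix K assume K: "K \<in> Ps"
      then have "card K \<ge> 1" using Ps_fin by (auto simp: Ps_def Suc_le_eq card_gt_0_iff)
      then have "\<epsilon> ^ card K \<le> \<epsilon> ^ 1" using \<epsilon> by (intro power_decreasing) auto
      then show "\<bar>te K\<bar> < del" using \<epsilon> by (simp add: te_def)
    qed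
    have "pt te = rh n (\<lambda>_. \<epsilon>) x"
    proof -
      have "rh n (\<lambda>_. \<epsilon>) x = rh n (\<lambda>_. \<epsilon>) (pt (\<lambda>_. 1))" by (simp only: x_pt)
      also have "\<dots> = pt (st (\<lambda>_. \<epsilon>) (\<lambda>_. 1))" by (rule rh_pt)
      also have "\<dots> = pt te" by (rule pt_cong) (simp add: st_def te_def)
      finally show ?thesis by simp
    qed
    then have gte: "B [] te J = \<epsilon> ^ card J *\<^sub>R g x J"
      using natg[OF xU, of "\<lambda>_. \<epsilon>"] J by (simp add: B_def rh_def)
    define PJ where "PJ = {S \<in> Pow Ps. partition_on J S}"
    have "B [] te J = (\<Sum>S\<in>Pow (set Ks). (\<Prod>K\<in>S. te K) *\<^sub>R B ([] @ filter (\<lambda>K. K \<in> S) Ks) (\<lambda>_. 0) J)"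
      by (rule tay[OF lF0 lF1 Ks(1)]) (use Ks te in auto)
    also have "\<dots> = (\<Sum>S\<in>Pow Ps. (\<Prod>K\<in>S. te K) *\<^sub>R B (FS Ks S) (\<lambda>_. 0) J)" by (simp add: Ks FS_def)
    also have "\<dots> = (\<Sum>S\<in>PJ. (\<Prod>K\<in>S. te K) *\<^sub>R B (FS Ks S) (\<lambda>_. 0) J)"
    proof (rule sum.mono_neutral_right)
      show "finite (Pow Ps)" using finite_Ps by simp
      show "PJ \<subseteq> Pow Ps" by (auto simp: PJ_def)
      show "\<forall>S\<in>Pow Ps - PJ. (\<Prod>K\<in>S. te K) *\<^sub>R B (FS Ks S) (\<lambda>_. 0) J = 0"
      proof
        fix S assume S: "S \<in> Pow Ps - PJ"
        then have "B (FS Ks S) (\<lambda>_. 0) J = 0" using FSs[of S] by (intro Z) (auto simp: PJ_def)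
        then show "(\<Prod>K\<in>S. te K) *\<^sub>R B (FS Ks S) (\<lambda>_. 0) J = 0" by simp
      qed
    qed
    also have "\<dots> = (\<Sum>S\<in>PJ. \<epsilon> ^ card J *\<^sub>R B (FS Ks S) (\<lambda>_. 0) J)"
    proof (rule sum.cong[OF refl])
      fix S assume "S \<in> PJ"
      then have p: "partition_on J S" "S \<subseteq> Ps" by (auto simp: PJ_def)
      have "(\<Prod>K\<in>S. te K) = \<epsilon> ^ (\<Sum>K\<in>S. card K)" by (simp add: te_def power_sum)
      also have "(\<Sum>K\<in>S. card K) = card J"
      proof -
        have "card (\<Union>S) = (\<Sum>K\<in>S. card K)" using p Ps_fin by (intro card_Union_disjoint) (auto simp: partition_on_def)
        then show ?thesis using p by (simp add: partition_on_def)
      qed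
      finally show "(\<Prod>K\<in>S. te K) *\<^sub>R B (FS Ks S) (\<lambda>_. 0) J = \<epsilon> ^ card J *\<^sub>R B (FS Ks S) (\<lambda>_. 0) J" by simp
    qed
    also have "\<dots> = \<epsilon> ^ card J *\<^sub>R (\<Sum>S\<in>PJ. B (FS Ks S) (\<lambda>_. 0) J)" by (simp add: scaleR_sum_right)
    finally have gx: "g x J = (\<Sum>S\<in>PJ. B (FS Ks S) (\<lambda>_. 0) J)" using gte \<epsilon> by simp
    have inner0: "(\<Sum>\<omega>\<in>{\<omega>. partition_on I \<omega>}. bder g (card \<omega>) (blockdirs x \<omega>) (comp0 x) J) = 0"
      if I: "I \<in> Ps" "I \<noteq> J" for I
    proof (rule sum.neutral, rule ballI)
      fix \<omega> assume "\<omega> \<in> {\<omega>. partition_on I \<omega>}"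
      then have p: "partition_on I \<omega>" by simp
      have "\<omega> \<subseteq> Ps" using part_Ps[OF p] I by (auto simp: Ps_def)
      moreover have "\<not> partition_on J \<omega>" using p I(2) by (auto simp: partition_on_def)
      ultimately have "B (FS Ks \<omega>) (\<lambda>_. 0) J = 0" using FSs by (intro Z) auto
      then show "bder g (card \<omega>) (blockdirs x \<omega>) (comp0 x) J = 0" using BD'[OF p I(1)] by simp
    qed
    have outer: "(\<Sum>I\<in>Ps. \<Sum>\<omega>\<in>{\<omega>. partition_on I \<omega>}. bder g (card \<omega>) (blockdirs x \<omega>) (comp0 x) J) =
        (\<Sum>I\<in>Ps \<inter> {J}. \<Sum>\<omega>\<in>{\<omega>. partition_on I \<omega>}. bder g (card \<omega>) (blockdirs x \<omega>) (comp0 x) J)"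
      by (rule sum.mono_neutral_right) (use finite_Ps inner0 in auto)
    show ?thesis
    proof (cases "J = {}")
      case True
      then have "PJ = {{}}" by (auto simp: PJ_def partition_on_empty)
      then have "g x J = B [] (\<lambda>_. 0) J" using gx by (simp add: FS_def)
      moreover have "Ps \<inter> {J} = {}" using True by (auto simp: Ps_def)
      ultimately show ?thesis using outer g0 by simp
    next
      case False
      then have JP: "J \<in> Ps" using J by (auto simp: Ps_def)
      have "g (comp0 x) J = 0" using g0 Z[of "[]" J] False by (auto simp: Ps_def partition_on_def)
      moreover have "PJ = {\<omega>. partition_on J \<omega>}" using part_Ps[OF _ J] by (auto simp: PJ_def)
      moreover have "(\<Sum>\<omega>\<in>{\<omega>. partition_on J \<omega>}. bder g (card \<omega>) (blockdirs x \<omega>) (comp0 x) J) =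
                     (\<Sum>\<omega>\<in>{\<omega>. partition_on J \<omega>}. B (FS Ks \<omega>) (\<lambda>_. 0) J)"
        using BD'[OF _ JP] by (intro sum.cong) auto
      moreover have "Ps \<inter> {J} = {J}" using JP by auto
      ultimately show ?thesis using outer gx by simp
    qed
  qed
qed

end



definition rho :: "(nat \<Rightarrow> real) \<Rightarrow> (nat set \<Rightarrow> real) \<Rightarrow> nat set \<Rightarrow> real" where
  "rho s a = (\<lambda>J. (\<Prod>i\<in>J. s i) * a J)"

lemma ghom_rho: "ghom n n (rho s)"
  unfolding ghom_def
proof (intro conjI ballI allI)
  fix a assume "a \<in> grass n" then show "rho s a \<in> grass n" by (auto simp: grass_def rho_def)
next
  fix a b show "rho s (vadd a b) = vadd (rho s a) (rho s b)" by (auto simp: rho_def vadd_def algebra_simps)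
next
  fix c a show "rho s (vsc c a) = vsc c (rho s a)" by (auto simp: rho_def vsc_def)
next
  fix a b :: "nat set \<Rightarrow> real"
  show "rho s (gmul a b) = gmul (rho s a) (rho s b)"
  proof
    fix K
    show "rho s (gmul a b) K = gmul (rho s a) (rho s b) K"
    proof (cases "finite K")
      case False
      then have "infinite (Pow K)" by simp
      then show ?thesis by (simp add: rho_def gmul_def)
    next
      case True
      have "rho s (gmul a b) K = (\<Sum>I\<in>Pow K. (\<Prod>i\<in>K. s i) * (gsign I (K - I) * a I * b (K - I)))"
        by (simp add: rho_def gmul_def sum_distrib_left)
      also have "\<dots> = gmul (rho s a) (rho s b) K"
        unfolding gmul_def rho_def
      proof (rule sum.cong[OF refl])
        fix I assume "I \<in> Pow K"
        then have "(\<Prod>i\<in>K. s i) = (\<Prod>i\<in>K - I. s i) * (\<Prod>i\<in>I. s i)" using True by (intro prod.subset_diff) auto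
        then show "(\<Prod>i\<in>K. s i) * (gsign I (K - I) * a I * b (K - I)) = gsign I (K - I) * ((\<Prod>i\<in>I. s i) * a I) * ((\<Prod>i\<in>K - I. s i) * b (K - I))"
          by (simp add: algebra_simps)
      qed
      finally show ?thesis .
    qed
  qed
next
  show "rho s gone = gone" by (auto simp: rho_def gone_def gb_def)
next
  fix a assume "a \<in> geven n" then show "rho s a \<in> geven n" by (auto simp: geven_def grass_def rho_def)
next
  fix a assume "a \<in> godd n" then show "rho s a \<in> godd n" by (auto simp: godd_def grass_def rho_def)
qed

lemma barmap_rho: "barmap n (rho s) y = rh n s y"
proof
  fix J
  have "barmap n (rho s) y J = (\<Sum>I\<in>Pow {1..n}. (if J = I then (\<Prod>i\<in>J. s i) else 0) *\<^sub>R y I)"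
    unfolding barmap_def rho_def gb_def by (intro sum.cong) auto
  also have "\<dots> = (\<Sum>I\<in>Pow {1..n}. if I = J then (\<Prod>i\<in>J. s i) *\<^sub>R y J else 0)"
    by (intro sum.cong) auto
  also have "\<dots> = rh n s y J" by (simp add: rh_def)
  finally show "barmap n (rho s) y J = rh n s y J" .
qed

theorem mainTheorem4:
  fixes k :: enat
    and U :: "nat \<Rightarrow> (nat set \<Rightarrow> ('e0::{real_vector,t2_space}) \<times> ('e1::{real_vector,t2_space})) set"
    and f :: "nat \<Rightarrow> (nat set \<Rightarrow> 'e0 \<times> 'e1) \<Rightarrow> (nat set \<Rightarrow> ('f0::{real_vector,t2_space}) \<times> ('f1::{real_vector,t2_space}))"
    and n :: nat
    and x :: "nat set \<Rightarrow> 'e0 \<times> 'e1"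
  assumes "lcs TYPE('e0)" and "lcs TYPE('e1)" and "lcs TYPE('f0)" and "lcs TYPE('f1)"
    and "open_subfunctor k U"
    and "nat_trans k U f"
    and "\<And>m. enat m \<le> k \<Longrightarrow> bsmooth (sbar m) (U m) (f m)"
    and "enat n \<le> k"
    and "x \<in> U n"
  shows "f n x = (\<lambda>J. f n (comp0 x) J +
           (\<Sum>I\<in>Pow {1..n} - {{}}. \<Sum>\<omega>\<in>{\<omega>. partition_on I \<omega>}.
               bder (f n) (card \<omega>) (blockdirs x \<omega>) (comp0 x) J))"
proof -
  interpret I: SF "f n" "U n" n x
  proof
    show "plcs TYPE('e0 \<times> 'e1)" by (rule plcs_pair) fact+
    show "plcs TYPE('f0 \<times> 'f1)" by (rule plcs_pair) fact+
    show "bsmooth (sbar n) (U n) (f n)" using assms(7,8) .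
    show "openin (top_of_set (sbar n)) (U n)" using assms(5,8) unfolding open_subfunctor_def by blast
    show "x \<in> U n" by fact
  next
    fix s y assume y: "y \<in> U n"
    have H: "\<forall>n m \<rho>. enat n \<le> k \<longrightarrow> enat m \<le> k \<longrightarrow> ghom n m \<rho> \<longrightarrow> barmap n \<rho> ` U n \<subseteq> U m"
      using assms(5) unfolding open_subfunctor_def by (rule conjunct2)
    have "barmap n (rho s) ` U n \<subseteq> U n" using H[rule_format, OF assms(8) assms(8) ghom_rho] .
    then have "barmap n (rho s) y \<in> U n" using y by (rule subsetD[OF _ imageI])
    then show "rh n s y \<in> U n" by (simp only: barmap_rho)
    have H2: "\<forall>n m \<rho> x. enat n \<le> k \<longrightarrow> enat m \<le> k \<longrightarrow> ghom n m \<rho> \<longrightarrow> x \<in> U n \<longrightarrow>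
        f m (barmap n \<rho> x) = barmap n \<rho> (f n x)"
      using assms(6) unfolding nat_trans_def by (rule conjunct2)
    have "f n (barmap n (rho s) y) = barmap n (rho s) (f n y)"
      using H2[rule_format, OF assms(8) assms(8) ghom_rho y] .
    then show "f n (rh n s y) = rh n s (f n y)" by (simp add: barmap_rho)
  qed
  show ?thesis using I.final[OF assms(3,4)] by (simp add: I.Ps_def)
qed



end
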